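(* Let $C$ be a bialgebra over a commutative ring $\Bbbk$, with product $\mu$, unit $1_C$, coproduct $\Delta$ (iterated coproduct written $\Delta^{n-1}(c)=c^{(1)}\otimes\dots\otimes c^{(n)}$) and counit $\varepsilon$. Let $\mathcal{O}_C$ be the operad with multiplication with $\mathcal{O}_C(n)=C^{\otimes n}$, identity $1_C\in\mathcal{O}_C(1)$, partial compositions $$(a_1\otimes\dots\otimes a_m)\circ_i(b_1\otimes\dots\otimes b_n)=a_1\otimes\dots\otimes a_{i-1}\otimes a_i^{(1)}b_1\otimes\dots\otimes a_i^{(n)}b_n\otimes a_{i+1}\otimes\dots\otimes a_m,$$ multiplication $1_C\otimes 1_C\in\mathcal{O}_C(2)$ and $e=1\in\Bbbk=\mathcal{O}_C(0)$; its cochain complex is the cobar construction $\Omega C$ and its cohomology is $\mathrm{Cotor}^*_C(\Bbbk,\Bbbk)$, which thus carries a Gerstenhaber algebra structure. Let $\mathcal{C}o\mathcal{E}nd(C)$ be the operad with multiplication $\mathcal{C}o\mathcal{E}nd(C)(n)=\mathrm{Hom}_\Bbbk(C,C^{\otimes n})$, $\gamma(f;g_1,\dots,g_n)=(g_1\otimes\dots\otimes g_n)\circ f$, identity $\mathrm{id}_C$, multiplication $\Delta$ and $e=\varepsilon$; its cochain complex is the Hochschild cochain complex $\mathcal{C}^*_{coalg}(C,C)$ of the coalgebra $C$, whose cohomology $HH^*_{coalg}(C,C)$ is thus a Gerstenhaber algebra. Then the linear maps $ext:C^{\otimes n}\to\mathrm{Hom}_\Bbbk(C,C^{\otimes n})$,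 $ext(c_1\otimes\dots\otimes c_n)(c)=c^{(1)}c_1\otimes\dots\otimes c^{(n)}c_n$, induce an injective morphism of Gerstenhaber algebras $\mathrm{Cotor}^*_C(\Bbbk,\Bbbk)\hookrightarrow HH^*_{coalg}(C,C)$; i.e. $\mathrm{Cotor}^*_C(\Bbbk,\Bbbk)$ is a sub Gerstenhaber algebra of $HH^*_{coalg}(C,C)$.
   Context: A (non-symmetric, $\Bbbk$-linear) operad $O$ consists of $\Bbbk$-modules $O(n)$, $n\ge 0$, an identity $id\in O(1)$ and associative unital structure maps, equivalently partial compositions $\circ_i:O(m)\otimes O(n)\to O(m+n-1)$, $1\le i\le m$. An operad with multiplication is an operad with $\mu\in O(2)$, $e\in O(0)$ such that $\mu\circ_1\mu=\mu\circ_2\mu$ and $\mu\circ_1e=id=\mu\circ_2 e$. Its cochain complex $\mathcal{C}^*(O)$ has $O(n)$ in degree $n$ and differential $df=\mu\circ_2 f+\sum_{i=1}^n(-1)^if\circ_i\mu+(-1)^{n+1}\mu\circ_1 f$. The cup product $f\cup g=(\mu\circ_1 f)\circ_{m+1}g$ for $f\in O(m)$, $g\in O(n)$, and the bracket $\{f,g\}=f\bar\circ g-(-1)^{(m-1)(n-1)}g\bar\circ f$ with $f\bar\circ g=(-1)^{(m-1)(n-1)}\sum_{i=1}^m(-1)^{(n-1)(i-1)}f\circ_i g$, induce on the cohomology $H(\mathcal{C}^*(O))$ a Gerstenhaber algebra structure (graded commutative product plus degree $-1$ Lie bracket satisfying the Poisson rule). Morphisms of operads with multiplication induce morphisms of Gerstenhaber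 algebras. *)

theory Defs
  imports Main "HOL.Modules"
begin

text \<open>An element of the free k-module on the set of finite words over C is
represented by a finitely supported function from words to k.  The tensor
power of C of degree n is the set of such functions supported on words of
length n, modulo the submodule of multilinearity relations (mlrel).
Elements of tensor powers are therefore handled through representatives,
and equality in the tensor power is the relation teq.\<close>

type_synonym ('c, 'k) fm = "'c list \<Rightarrow> 'k"

definition fsupp :: "('c, 'k::zero) fm \<Rightarrow> 'c list set" where
  "fsupp f = {xs. f xs \<noteq> 0}"

definition hom_deg :: "nat \<Rightarrow> ('c, 'k::zero) fm \<Rightarrow> bool" where
  "hom_deg n f \<longleftrightarrow> finite (fsupp f) \<and> (\<forall>xs. f xs \<noteq> 0 \<longrightarrow> length xs = n)"

definition fzero :: "('c, 'k::zero) fm" where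
  "fzero = (\<lambda>_. 0)"

definition fadd :: "('c, 'k::plus) fm \<Rightarrow> ('c, 'k) fm \<Rightarrow> ('c, 'k) fm" where
  "fadd f g = (\<lambda>xs. f xs + g xs)"

definition fsmult :: "'k::times \<Rightarrow> ('c, 'k) fm \<Rightarrow> ('c, 'k) fm" where
  "fsmult a f = (\<lambda>xs. a * f xs)"

definition fsub :: "('c, 'k::minus) fm \<Rightarrow> ('c, 'k) fm \<Rightarrow> ('c, 'k) fm" where
  "fsub f g = (\<lambda>xs. f xs - g xs)"

text \<open>The basis element given by a word, i.e. the elementary tensor
c1 \<otimes> ... \<otimes> cn for the word [c1,...,cn].\<close>
definition basis :: "'c list \<Rightarrow> ('c, 'k::{zero,one}) fm" where
  "basis xs = (\<lambda>ys. if ys = xs then 1 else 0)"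

text \<open>Tensor (concatenation) product of representatives.\<close>
definition fmul :: "('c, 'k::comm_ring_1) fm \<Rightarrow> ('c, 'k) fm \<Rightarrow> ('c, 'k) fm" where
  "fmul f g = (\<lambda>xs. \<Sum>i\<in>{..length xs}. f (take i xs) * g (drop i xs))"

text \<open>Linear extension: the image of f under the linear map sending
the basis word xs to Psi xs.\<close>
definition flin :: "('c, 'k::comm_ring_1) fm \<Rightarrow> ('c list \<Rightarrow> ('d, 'k) fm) \<Rightarrow> ('d, 'k) fm" where
  "flin f Psi = (\<lambda>ys. \<Sum>xs\<in>fsupp f. f xs * Psi xs ys)"

text \<open>Componentwise product (a1 \<otimes>..\<otimes> an)(b1 \<otimes>..\<otimes> bn) = a1 b1 \<otimes>..\<otimes> an bn,
extended bilinearly (used on arguments of equal degree).\<close>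
definition fzip :: "('c \<Rightarrow> 'c \<Rightarrow> 'c) \<Rightarrow> ('c, 'k::comm_ring_1) fm \<Rightarrow> ('c, 'k) fm \<Rightarrow> ('c, 'k) fm" where
  "fzip mult f g = flin f (\<lambda>xs. flin g (\<lambda>ys. basis (map2 mult xs ys)))"

text \<open>The submodule of multilinearity relations (it is automatically a
two-sided ideal for the concatenation product, and homogeneous).\<close>
inductive_set mlrel :: "('k::comm_ring_1 \<Rightarrow> 'c::ab_group_add \<Rightarrow> 'c) \<Rightarrow> ('c, 'k) fm set"
  for scale :: "'k::comm_ring_1 \<Rightarrow> 'c::ab_group_add \<Rightarrow> 'c" where
  rel_add: "fsub (basis (xs @ (x + y) # ys)) (fadd (basis (xs @ x # ys)) (basis (xs @ y # ys))) \<in> mlrel scale"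
| rel_smult: "fsub (basis (xs @ scale a x # ys)) (fsmult a (basis (xs @ x # ys))) \<in> mlrel scale"
| rel_zero: "fzero \<in> mlrel scale"
| rel_plus: "f \<in> mlrel scale \<Longrightarrow> g \<in> mlrel scale \<Longrightarrow> fadd f g \<in> mlrel scale"
| rel_scale: "f \<in> mlrel scale \<Longrightarrow> fsmult a f \<in> mlrel scale"

definition teq :: "('k::comm_ring_1 \<Rightarrow> 'c::ab_group_add \<Rightarrow> 'c) \<Rightarrow> ('c, 'k) fm \<Rightarrow> ('c, 'k) fm \<Rightarrow> bool" where
  "teq scale f g \<longleftrightarrow> fsub f g \<in> mlrel scale"

definition bialgebra ::
  "('k::comm_ring_1 \<Rightarrow> 'c::ab_group_add \<Rightarrow> 'c) \<Rightarrow> ('c \<Rightarrow> 'c \<Rightarrow> 'c) \<Rightarrow> 'c \<Rightarrow>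
   ('c \<Rightarrow> ('c, 'k) fm) \<Rightarrow> ('c \<Rightarrow> 'k) \<Rightarrow> bool" where
  "bialgebra scale mult u Delta eps \<longleftrightarrow>
    module scale \<and>
    (\<forall>x y z. mult (x + y) z = mult x z + mult y z) \<and>
    (\<forall>x y z. mult x (y + z) = mult x y + mult x z) \<and>
    (\<forall>a x y. mult (scale a x) y = scale a (mult x y)) \<and>
    (\<forall>a x y. mult x (scale a y) = scale a (mult x y)) \<and>
    (\<forall>x y z. mult (mult x y) z = mult x (mult y z)) \<and>
    (\<forall>x. mult u x = x \<and> mult x u = x) \<and>
    (\<forall>c. hom_deg 2 (Delta c)) \<and>
    (\<forall>x y. teq scale (Delta (x + y)) (fadd (Delta x) (Delta y))) \<and>
    (\<forall>a x. teq scale (Delta (scale a x)) (fsmult a (Delta x))) \<and>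
    (\<forall>x y. eps (x + y) = eps x + eps y) \<and>
    (\<forall>a x. eps (scale a x) = a * eps x) \<and>
    (\<forall>c. teq scale (flin (Delta c) (\<lambda>xs. fmul (Delta (xs ! 0)) (basis [xs ! 1])))
                    (flin (Delta c) (\<lambda>xs. fmul (basis [xs ! 0]) (Delta (xs ! 1))))) \<and>
    (\<forall>c. teq scale (flin (Delta c) (\<lambda>xs. fsmult (eps (xs ! 0)) (basis [xs ! 1]))) (basis [c])) \<and>
    (\<forall>c. teq scale (flin (Delta c) (\<lambda>xs. fsmult (eps (xs ! 1)) (basis [xs ! 0]))) (basis [c])) \<and>
    (\<forall>x y. teq scale (Delta (mult x y)) (fzip mult (Delta x) (Delta y))) \<and>
    teq scale (Delta u) (basis [u, u]) \<and>
    (\<forall>x y. eps (mult x y) = eps x * eps y) \<and>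
    eps u = 1"

text \<open>Iterated coproduct Delta^(n-1) : C \<rightarrow> C^{\<otimes> n}; for n = 0 it is the counit.\<close>
fun iterD :: "('c \<Rightarrow> ('c, 'k::comm_ring_1) fm) \<Rightarrow> ('c \<Rightarrow> 'k) \<Rightarrow> nat \<Rightarrow> 'c \<Rightarrow> ('c, 'k) fm" where
  "iterD Delta eps 0 c = fsmult (eps c) (basis [])"
| "iterD Delta eps (Suc 0) c = basis [c]"
| "iterD Delta eps (Suc (Suc k)) c =
     flin (Delta c) (\<lambda>xs. fmul (basis [xs ! 0]) (iterD Delta eps (Suc k) (xs ! 1)))"

text \<open>An operad with multiplication presented through representatives of type 'o:
membership in arity n, the "is zero" predicate, module operations,
partial compositions (om_comp i f g = f \<circ>_i g), multiplication mu and e.\<close>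
record ('o, 'k) opm =
  om_mem :: "nat \<Rightarrow> 'o \<Rightarrow> bool"
  om_null :: "'o \<Rightarrow> bool"
  om_add :: "'o \<Rightarrow> 'o \<Rightarrow> 'o"
  om_smult :: "'k \<Rightarrow> 'o \<Rightarrow> 'o"
  om_zero :: "'o"
  om_comp :: "nat \<Rightarrow> 'o \<Rightarrow> 'o \<Rightarrow> 'o"
  om_mu :: "'o"
  om_e :: "'o"

definition osign :: "int \<Rightarrow> 'k::comm_ring_1" where
  "osign z = (if even z then 1 else - 1)"

definition osum :: "('o, 'k) opm \<Rightarrow> 'o list \<Rightarrow> 'o" where
  "osum Op xs = foldr (om_add Op) xs (om_zero Op)"

definition osub :: "('o, 'k::comm_ring_1) opm \<Rightarrow> 'o \<Rightarrow> 'o \<Rightarrow> 'o" where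
  "osub Op f g = om_add Op f (om_smult Op (- 1) g)"

definition cdiff :: "('o, 'k::comm_ring_1) opm \<Rightarrow> nat \<Rightarrow> 'o \<Rightarrow> 'o" where
  "cdiff Op n f =
     om_add Op (om_comp Op 2 (om_mu Op) f)
       (om_add Op (osum Op (map (\<lambda>i. om_smult Op (osign (int i)) (om_comp Op i f (om_mu Op))) [1..<n+1]))
          (om_smult Op (osign (int n + 1)) (om_comp Op 1 (om_mu Op) f)))"

definition cocycle :: "('o, 'k::comm_ring_1) opm \<Rightarrow> nat \<Rightarrow> 'o \<Rightarrow> bool" where
  "cocycle Op n f \<longleftrightarrow> om_mem Op n f \<and> om_null Op (cdiff Op n f)"

definition coboundary :: "('o, 'k::comm_ring_1) opm \<Rightarrow> nat \<Rightarrow> 'o \<Rightarrow> bool" where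
  "coboundary Op n f \<longleftrightarrow> om_mem Op n f \<and>
     (om_null Op f \<or> (n \<ge> 1 \<and> (\<exists>g. om_mem Op (n - 1) g \<and> om_null Op (osub Op f (cdiff Op (n - 1) g)))))"

definition cohom :: "('o, 'k::comm_ring_1) opm \<Rightarrow> nat \<Rightarrow> 'o \<Rightarrow> 'o \<Rightarrow> bool" where
  "cohom Op n f g \<longleftrightarrow> coboundary Op n (osub Op f g)"

definition cup :: "('o, 'k) opm \<Rightarrow> nat \<Rightarrow> 'o \<Rightarrow> 'o \<Rightarrow> 'o" where
  "cup Op m f g = om_comp Op (m + 1) (om_comp Op 1 (om_mu Op) f) g"

definition obar :: "('o, 'k::comm_ring_1) opm \<Rightarrow> nat \<Rightarrow> nat \<Rightarrow> 'o \<Rightarrow> 'o \<Rightarrow> 'o" where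
  "obar Op m n f g = om_smult Op (osign ((int m - 1) * (int n - 1)))
     (osum Op (map (\<lambda>i. om_smult Op (osign ((int n - 1) * (int i - 1))) (om_comp Op i f g)) [1..<m+1]))"

definition gbracket :: "('o, 'k::comm_ring_1) opm \<Rightarrow> nat \<Rightarrow> nat \<Rightarrow> 'o \<Rightarrow> 'o \<Rightarrow> 'o" where
  "gbracket Op m n f g = osub Op (obar Op m n f g)
     (om_smult Op (osign ((int m - 1) * (int n - 1))) (obar Op n m g f))"

definition ocomp :: "('c \<Rightarrow> 'c \<Rightarrow> 'c) \<Rightarrow> ('c \<Rightarrow> ('c, 'k::comm_ring_1) fm) \<Rightarrow> ('c \<Rightarrow> 'k) \<Rightarrow>
    nat \<Rightarrow> ('c, 'k) fm \<Rightarrow> ('c, 'k) fm \<Rightarrow> ('c, 'k) fm" where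
  "ocomp mult Delta eps i f g =
     flin f (\<lambda>as. flin g (\<lambda>bs.
        fmul (fmul (basis (take (i - 1) as))
                   (fzip mult (iterD Delta eps (length bs) (as ! (i - 1))) (basis bs)))
             (basis (drop i as))))"

definition OC :: "('k::comm_ring_1 \<Rightarrow> 'c::ab_group_add \<Rightarrow> 'c) \<Rightarrow> ('c \<Rightarrow> 'c \<Rightarrow> 'c) \<Rightarrow> 'c \<Rightarrow>
   ('c \<Rightarrow> ('c, 'k) fm) \<Rightarrow> ('c \<Rightarrow> 'k) \<Rightarrow> (('c, 'k) fm, 'k) opm" where
  "OC scale mult u Delta eps =
    \<lparr> om_mem = (\<lambda>n f. hom_deg n f),
      om_null = (\<lambda>f. f \<in> mlrel scale),
      om_add = fadd, om_smult = fsmult, om_zero = fzero,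
      om_comp = ocomp mult Delta eps,
      om_mu = basis [u, u],
      om_e = basis [] \<rparr>"

text \<open>Elements of CoEnd(C)(n) = Hom_k(C, C^{\<otimes> n}) are k-linear maps,
given by representatives; f \<circ>_i g = (id^{i-1} \<otimes> g \<otimes> id^{m-i}) \<circ> f.\<close>
definition ce_mem :: "('k::comm_ring_1 \<Rightarrow> 'c::ab_group_add \<Rightarrow> 'c) \<Rightarrow> nat \<Rightarrow> ('c \<Rightarrow> ('c, 'k) fm) \<Rightarrow> bool" where
  "ce_mem scale n g \<longleftrightarrow> (\<forall>c. hom_deg n (g c)) \<and>
     (\<forall>x y. teq scale (g (x + y)) (fadd (g x) (g y))) \<and>
     (\<forall>a x. teq scale (g (scale a x)) (fsmult a (g x)))"

definition cecomp :: "nat \<Rightarrow> ('c \<Rightarrow> ('c, 'k::comm_ring_1) fm) \<Rightarrow> ('c \<Rightarrow> ('c, 'k) fm) \<Rightarrow> ('c \<Rightarrow> ('c, 'k) fm)" where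
  "cecomp i f g = (\<lambda>c. flin (f c) (\<lambda>as.
      fmul (fmul (basis (take (i - 1) as)) (g (as ! (i - 1)))) (basis (drop i as))))"

definition CE :: "('k::comm_ring_1 \<Rightarrow> 'c::ab_group_add \<Rightarrow> 'c) \<Rightarrow>
   ('c \<Rightarrow> ('c, 'k) fm) \<Rightarrow> ('c \<Rightarrow> 'k) \<Rightarrow> ('c \<Rightarrow> ('c, 'k) fm, 'k) opm" where
  "CE scale Delta eps =
    \<lparr> om_mem = ce_mem scale,
      om_null = (\<lambda>g. \<forall>c. g c \<in> mlrel scale),
      om_add = (\<lambda>f g c. fadd (f c) (g c)),
      om_smult = (\<lambda>a f c. fsmult a (f c)),
      om_zero = (\<lambda>c. fzero),
      om_comp = cecomp,
      om_mu = Delta,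
      om_e = (\<lambda>c. fsmult (eps c) (basis [])) \<rparr>"

definition extmap :: "('c \<Rightarrow> 'c \<Rightarrow> 'c) \<Rightarrow> ('c \<Rightarrow> ('c, 'k::comm_ring_1) fm) \<Rightarrow> ('c \<Rightarrow> 'k) \<Rightarrow>
    nat \<Rightarrow> ('c, 'k) fm \<Rightarrow> 'c \<Rightarrow> ('c, 'k) fm" where
  "extmap mult Delta eps n x = (\<lambda>c. fzip mult (iterD Delta eps n c) x)"

end

theory Submission
  imports Defs
begin


abbreviation fin :: "('c, 'k::zero) fm \<Rightarrow> bool" where "fin f \<equiv> finite (fsupp f)"

definition sd :: "nat \<Rightarrow> ('c, 'k::zero) fm \<Rightarrow> bool" where
  "sd N f \<longleftrightarrow> (\<forall>xs. f xs \<noteq> 0 \<longrightarrow> length xs = N)"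

lemma hom_deg_iff: "hom_deg n f \<longleftrightarrow> fin f \<and> sd n f"
  by (simp add: hom_deg_def sd_def)

lemma fsupp_iff[simp]: "xs \<in> fsupp f \<longleftrightarrow> f xs \<noteq> 0"
  by (simp add: fsupp_def)

lemma fsupp_basis: "fsupp (basis w :: ('c,'k::zero_neq_one) fm) \<subseteq> {w}"
  by (auto simp: basis_def split: if_splits)

lemma fin_basis[simp]: "fin (basis w :: ('c,'k::zero_neq_one) fm)"
  using fsupp_basis finite_subset by blast

lemma fin_fzero[simp]: "fin (fzero :: ('c,'k::zero) fm)"
  by (simp add: fzero_def fsupp_def)

lemma fin_fadd[intro]: "fin f \<Longrightarrow> fin g \<Longrightarrow> fin (fadd f g :: ('c,'k::monoid_add) fm)"
  by (rule finite_subset[of _ "fsupp f \<union> fsupp g"]) (auto simp: fadd_def)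

lemma fin_fsub[intro]: "fin f \<Longrightarrow> fin g \<Longrightarrow> fin (fsub f g :: ('c,'k::group_add) fm)"
  by (rule finite_subset[of _ "fsupp f \<union> fsupp g"]) (auto simp: fsub_def)

lemma fin_fsmult[intro]: "fin f \<Longrightarrow> fin (fsmult a f :: ('c,'k::mult_zero) fm)"
  by (rule finite_subset[of _ "fsupp f"]) (auto simp: fsmult_def)

lemma sd_alt: "sd n f \<longleftrightarrow> (\<forall>xs. length xs \<noteq> n \<longrightarrow> f xs = 0)"
  unfolding sd_def by blast
lemma sd_fadd[intro]: "sd n f \<Longrightarrow> sd n g \<Longrightarrow> sd n (fadd f g :: ('c,'k::monoid_add) fm)"
  by (simp add: sd_alt fadd_def)
lemma sd_fsub[intro]: "sd n f \<Longrightarrow> sd n g \<Longrightarrow> sd n (fsub f g :: ('c,'k::group_add) fm)"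
  by (simp add: sd_alt fsub_def)
lemma sd_fsmult[intro]: "sd n f \<Longrightarrow> sd n (fsmult a f :: ('c,'k::mult_zero) fm)"
  by (simp add: sd_alt fsmult_def)
lemma sd_fzero[intro]: "sd n (fzero :: ('c,'k::zero) fm)"
  by (auto simp: sd_def fzero_def)
lemma sd_basis[intro]: "length w = n \<Longrightarrow> sd n (basis w :: ('c,'k::zero_neq_one) fm)"
  by (simp add: sd_alt basis_def)

lemma flin_superset:
  assumes "finite S" "fsupp f \<subseteq> S"
  shows "flin f Psi = (\<lambda>ys. \<Sum>xs\<in>S. f xs * Psi xs ys)"
proof
  fix ys
  show "flin f Psi ys = (\<Sum>xs\<in>S. f xs * Psi xs ys)"
    unfolding flin_def
    by (rule sum.mono_neutral_left) (use assms in auto)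
qed

lemma flin_apply_superset:
  "finite S \<Longrightarrow> fsupp f \<subseteq> S \<Longrightarrow> flin f Psi ys = (\<Sum>xs\<in>S. f xs * Psi xs ys)"
  using flin_superset by metis

lemma flin_fadd:
  fixes f g :: "('c,'k::comm_ring_1) fm"
  assumes "fin f" "fin g"
  shows "flin (fadd f g) Psi = fadd (flin f Psi) (flin g Psi)"
proof -
  let ?S = "fsupp f \<union> fsupp g"
  have s: "fsupp (fadd f g) \<subseteq> ?S" by (auto simp: fadd_def)
  show ?thesis unfolding fadd_def
    apply (subst flin_superset[OF _ s[unfolded fadd_def]]) using assms apply simp
    apply (subst (1 2) flin_superset[of ?S]) using assms
    by (auto simp: distrib_right sum.distrib)
qed

lemma flin_fsmult:
  fixes f :: "('c,'k::comm_ring_1) fm"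
  assumes "fin f"
  shows "flin (fsmult a f) Psi = fsmult a (flin f Psi)"
proof -
  have s: "fsupp (fsmult a f) \<subseteq> fsupp f" by (auto simp: fsmult_def)
  show ?thesis
    apply (subst flin_superset[OF assms s])
    apply (subst flin_superset[OF assms order.refl])
    by (auto simp: fsmult_def sum_distrib_left mult.assoc)
qed

lemma flin_fsub:
  fixes f g :: "('c,'k::comm_ring_1) fm"
  assumes "fin f" "fin g"
  shows "flin (fsub f g) Psi = fsub (flin f Psi) (flin g Psi)"
proof -
  let ?S = "fsupp f \<union> fsupp g"
  have s: "fsupp (fsub f g) \<subseteq> ?S" by (auto simp: fsub_def)
  show ?thesis unfolding fsub_def
    apply (subst flin_superset[OF _ s[unfolded fsub_def]]) using assms apply simp
    apply (subst (1 2) flin_superset[of ?S]) using assms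
    by (auto simp: left_diff_distrib sum_subtractf)
qed

lemma flin_fzero[simp]: "flin fzero Psi = (fzero :: ('d,'k::comm_ring_1) fm)"
  by (simp add: flin_def fzero_def fsupp_def)

lemma flin_basis[simp]: "flin (basis w) Psi = (Psi w :: ('d,'k::comm_ring_1) fm)"
  by (subst flin_superset[of "{w}"]) (auto simp: fsupp_basis basis_def split: if_splits)

lemma flin_cong:
  "(\<And>xs. f xs \<noteq> 0 \<Longrightarrow> Psi xs = Phi xs) \<Longrightarrow> flin f Psi = flin f Phi"
  unfolding flin_def by (intro ext sum.cong) auto

lemma flin_fzero_right[simp]: "flin f (\<lambda>_. fzero) = (fzero :: ('d,'k::comm_ring_1) fm)"
  by (simp add: flin_def fzero_def)

lemma flin_fadd_right:
  "flin f (\<lambda>xs. fadd (Psi xs) (Phi xs)) = fadd (flin f Psi) (flin f Phi)"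
  by (simp add: flin_def fadd_def distrib_left sum.distrib)

lemma flin_fsub_right:
  "flin f (\<lambda>xs. fsub (Psi xs) (Phi xs)) = fsub (flin f Psi) (flin f Phi)"
  by (simp add: flin_def fsub_def right_diff_distrib sum_subtractf)

lemma flin_fsmult_right:
  "flin f (\<lambda>xs. fsmult a (Psi xs)) = fsmult a (flin f Psi)"
  by (simp add: flin_def fsmult_def sum_distrib_left algebra_simps)

lemma fsupp_flin: "fsupp (flin f Psi) \<subseteq> (\<Union>xs\<in>fsupp f. fsupp (Psi xs))"
proof
  fix ys assume "ys \<in> fsupp (flin f Psi)"
  hence "(\<Sum>xs\<in>fsupp f. f xs * Psi xs ys) \<noteq> 0" by (simp add: flin_def)
  then obtain xs where "xs \<in> fsupp f" "f xs * Psi xs ys \<noteq> 0"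
    by (meson sum.neutral)
  thus "ys \<in> (\<Union>xs\<in>fsupp f. fsupp (Psi xs))" by force
qed

lemma fin_flin[intro]:
  "fin f \<Longrightarrow> (\<And>xs. f xs \<noteq> 0 \<Longrightarrow> fin (Psi xs)) \<Longrightarrow> fin (flin f Psi)"
  by (rule finite_subset[OF fsupp_flin]) auto

lemma sd_flin[intro]:
  "(\<And>xs. f xs \<noteq> 0 \<Longrightarrow> sd n (Psi xs)) \<Longrightarrow> sd n (flin f Psi)"
  using fsupp_flin unfolding sd_def by (fastforce)

lemma flin_assoc:
  fixes f :: "('c,'k::comm_ring_1) fm"
  assumes "fin f" "\<And>xs. f xs \<noteq> 0 \<Longrightarrow> fin (Psi xs)"
  shows "flin (flin f Psi) Phi = flin f (\<lambda>xs. flin (Psi xs) Phi)"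
proof
  fix ys
  let ?U = "\<Union>xs\<in>fsupp f. fsupp (Psi xs)"
  have U: "finite ?U" using assms by auto
  have "flin (flin f Psi) Phi ys = (\<Sum>zs\<in>?U. flin f Psi zs * Phi zs ys)"
    by (rule flin_apply_superset[OF U fsupp_flin])
  also have "\<dots> = (\<Sum>zs\<in>?U. \<Sum>xs\<in>fsupp f. f xs * Psi xs zs * Phi zs ys)"
    by (simp add: flin_def sum_distrib_right)
  also have "\<dots> = (\<Sum>xs\<in>fsupp f. f xs * (\<Sum>zs\<in>?U. Psi xs zs * Phi zs ys))"
    by (subst sum.swap) (simp add: sum_distrib_left mult.assoc)
  also have "\<dots> = (\<Sum>xs\<in>fsupp f. f xs * flin (Psi xs) Phi ys)"
    apply (rule sum.cong, simp)
    apply (subst flin_apply_superset[OF U]) by auto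
  finally show "flin (flin f Psi) Phi ys = flin f (\<lambda>xs. flin (Psi xs) Phi) ys"
    by (simp add: flin_def)
qed

lemma flin_swap:
  "flin f (\<lambda>a. flin g (\<lambda>b. Theta a b)) = flin g (\<lambda>b. flin f (\<lambda>a. Theta a b))"
  unfolding flin_def
  by (rule ext) (simp add: sum_distrib_left sum.swap[of _ "fsupp f"] mult.left_commute)

lemma flin_id:
  fixes f :: "('c,'k::comm_ring_1) fm"
  assumes "fin f" shows "flin f basis = f"
proof
  fix ys
  show "flin f basis ys = f ys"
    apply (subst flin_apply_superset[of "insert ys (fsupp f)"])
    using assms by (auto simp: basis_def sum.delta'[of _ ys] if_distrib cong: if_cong)
qed



subsection \<open>fmul via flin\<close>

declare fin_fadd[simp] fin_fsub[simp] fin_fsmult[simp]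

lemma take_eq_imp: "take (length a) xs = a \<Longrightarrow> xs = a @ drop (length a) xs"
  by (metis append_take_drop_id)

lemma flin_append_basis:
  fixes g :: "('c,'k::comm_ring_1) fm"
  assumes "fin g"
  shows "flin g (\<lambda>b. basis (a @ b)) xs =
    (if take (length a) xs = a then g (drop (length a) xs) else 0)"
proof -
  let ?S = "insert (drop (length a) xs) (fsupp g)"
  have "flin g (\<lambda>b. basis (a @ b)) xs = (\<Sum>b\<in>?S. g b * basis (a @ b) xs)"
    by (rule flin_apply_superset) (use assms in auto)
  also have "\<dots> = (\<Sum>b\<in>?S. if b = drop (length a) xs then
        (if take (length a) xs = a then g b else 0) else 0)"
    apply (rule sum.cong, simp)
    apply (simp add: basis_def append_eq_conv_conj)
    by (metis append_take_drop_id)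
  also have "\<dots> = (if take (length a) xs = a then g (drop (length a) xs) else 0)"
    using assms by (simp add: sum.delta')
  finally show ?thesis .
qed

lemma fmul_flin:
  fixes f g :: "('c,'k::comm_ring_1) fm"
  assumes "fin f" "fin g"
  shows "fmul f g = flin f (\<lambda>a. flin g (\<lambda>b. basis (a @ b)))"
proof
  fix xs :: "'c list"
  let ?T = "(\<lambda>i. take i xs) ` {..length xs}"
  have T: "a \<in> ?T \<longleftrightarrow> take (length a) xs = a" for a :: "'c list"
  proof
    assume "a \<in> ?T" then show "take (length a) xs = a" by auto
  next
    assume h: "take (length a) xs = a"
    hence "length a \<le> length xs" by (metis length_take min.absorb_iff2 min.commute)
    thus "a \<in> ?T" using h by force
  qed
  let ?S = "fsupp f \<union> ?T"
  have "flin f (\<lambda>a. flin g (\<lambda>b. basis (a @ b))) xs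
      = (\<Sum>a\<in>?S. f a * flin g (\<lambda>b. basis (a @ b)) xs)"
    by (rule flin_apply_superset) (use assms in auto)
  also have "\<dots> = (\<Sum>a\<in>?S. if a \<in> ?T then f a * g (drop (length a) xs) else 0)"
    by (rule sum.cong) (auto simp: flin_append_basis[OF assms(2)] T)
  also have "\<dots> = (\<Sum>a\<in>?T. f a * g (drop (length a) xs))"
    by (subst sum.If_cases) (use assms in \<open>auto simp: Int_absorb1\<close>)
  also have "\<dots> = (\<Sum>i\<in>{..length xs}. f (take i xs) * g (drop i xs))"
  proof -
    have inj: "inj_on (\<lambda>i. take i xs) {..length xs}"
    proof (rule inj_onI)
      fix i j assume "i \<in> {..length xs}" "j \<in> {..length xs}" "take i xs = take j xs"
      then show "i = j" by (metis atMost_iff length_take min.absorb2)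
    qed
    show ?thesis by (simp add: sum.reindex[OF inj])
  qed
  finally show "fmul f g xs = flin f (\<lambda>a. flin g (\<lambda>b. basis (a @ b))) xs"
    by (simp add: fmul_def)
qed

lemma fin_fmul[intro]:
  fixes f g :: "('c,'k::comm_ring_1) fm"
  assumes "fin f" "fin g" shows "fin (fmul f g)"
  using assms by (simp add: fmul_flin) (intro fin_flin; auto)

lemma sd_fmul[intro]:
  fixes f g :: "('c,'k::comm_ring_1) fm"
  assumes "fin f" "fin g" "sd p f" "sd q g" shows "sd (p + q) (fmul f g)"
  using assms by (simp add: fmul_flin) (intro sd_flin; auto simp: sd_def basis_def split: if_splits)

lemma fmul_basis_basis[simp]: "fmul (basis a) (basis b) = (basis (a @ b) :: ('c,'k::comm_ring_1) fm)"
  by (simp add: fmul_flin)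

lemma fmul_basis_left:
  fixes F :: "('c,'k::comm_ring_1) fm"
  shows "fin F \<Longrightarrow> fmul (basis a) F = flin F (\<lambda>w. basis (a @ w))"
  by (simp add: fmul_flin)

lemma fmul_basis_right:
  fixes F :: "('c,'k::comm_ring_1) fm"
  shows "fin F \<Longrightarrow> fmul F (basis b) = flin F (\<lambda>w. basis (w @ b))"
  by (simp add: fmul_flin)

lemma fmul_flin_left:
  fixes f g :: "('c,'k::comm_ring_1) fm"
  assumes "fin f" "\<And>xs. f xs \<noteq> 0 \<Longrightarrow> fin (Psi xs)" "fin g"
  shows "fmul (flin f Psi) g = flin f (\<lambda>a. fmul (Psi a) g)"
  using assms by (simp add: fmul_flin flin_assoc fin_flin cong: flin_cong)

lemma fmul_flin_right:
  fixes f g :: "('c,'k::comm_ring_1) fm"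
  assumes "fin f" "\<And>xs. f xs \<noteq> 0 \<Longrightarrow> fin (Psi xs)" "fin g"
  shows "fmul g (flin f Psi) = flin f (\<lambda>a. fmul g (Psi a))"
proof -
  have "fmul g (flin f Psi) = flin g (\<lambda>a. flin f (\<lambda>b. flin (Psi b) (\<lambda>c. basis (a @ c))))"
    using assms by (simp add: fmul_flin flin_assoc fin_flin)
  also have "\<dots> = flin f (\<lambda>b. flin g (\<lambda>a. flin (Psi b) (\<lambda>c. basis (a @ c))))"
    by (rule flin_swap)
  also have "\<dots> = flin f (\<lambda>a. fmul g (Psi a))"
    using assms by (intro flin_cong) (simp add: fmul_flin)
  finally show ?thesis .
qed

lemma flin_fmul:
  fixes F G :: "('c,'k::comm_ring_1) fm"
  assumes "fin F" "fin G"
  shows "flin (fmul F G) Theta = flin F (\<lambda>a. flin G (\<lambda>b. Theta (a @ b)))"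
  using assms by (simp add: fmul_flin flin_assoc fin_flin)

lemma fmul_assoc:
  fixes f g h :: "('c,'k::comm_ring_1) fm"
  assumes "fin f" "fin g" "fin h"
  shows "fmul (fmul f g) h = fmul f (fmul g h)"
proof -
  have "fmul (fmul f g) h = flin f (\<lambda>a. flin g (\<lambda>b. flin h (\<lambda>c. basis (a @ b @ c))))"
    using assms by (simp add: fmul_flin[of "fmul f g"] flin_fmul fin_fmul)
  also have "\<dots> = fmul f (fmul g h)"
    using assms by (simp add: fmul_flin[of f "fmul g h"] flin_fmul fin_fmul)
  finally show ?thesis .
qed

lemma fmul_fadd_left: "fin f \<Longrightarrow> fin g \<Longrightarrow> fin h \<Longrightarrow>
   fmul (fadd f g) h = fadd (fmul f h) (fmul g h :: ('c,'k::comm_ring_1) fm)"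
  by (simp add: fmul_flin flin_fadd)
lemma fmul_fadd_right: "fin f \<Longrightarrow> fin g \<Longrightarrow> fin h \<Longrightarrow>
   fmul h (fadd f g) = fadd (fmul h f) (fmul h g :: ('c,'k::comm_ring_1) fm)"
  by (simp add: fmul_flin flin_fadd flin_fadd_right)
lemma fmul_fsub_left: "fin f \<Longrightarrow> fin g \<Longrightarrow> fin h \<Longrightarrow>
   fmul (fsub f g) h = fsub (fmul f h) (fmul g h :: ('c,'k::comm_ring_1) fm)"
  by (simp add: fmul_flin flin_fsub)
lemma fmul_fsub_right: "fin f \<Longrightarrow> fin g \<Longrightarrow> fin h \<Longrightarrow>
   fmul h (fsub f g) = fsub (fmul h f) (fmul h g :: ('c,'k::comm_ring_1) fm)"
  by (simp add: fmul_flin flin_fsub flin_fsub_right)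
lemma fmul_fsmult_left: "fin f \<Longrightarrow> fin h \<Longrightarrow>
   fmul (fsmult a f) h = fsmult a (fmul f h :: ('c,'k::comm_ring_1) fm)"
  by (simp add: fmul_flin flin_fsmult)
lemma fmul_fsmult_right: "fin f \<Longrightarrow> fin h \<Longrightarrow>
   fmul h (fsmult a f) = fsmult a (fmul h f :: ('c,'k::comm_ring_1) fm)"
  by (simp add: fmul_flin flin_fsmult flin_fsmult_right)
lemma fmul_fzero_left[simp]: "fmul fzero h = (fzero :: ('c,'k::comm_ring_1) fm)"
  by (simp add: fmul_def fzero_def)
lemma fmul_fzero_right[simp]: "fmul h fzero = (fzero :: ('c,'k::comm_ring_1) fm)"
  by (simp add: fmul_def fzero_def)

lemma fmul_nil_left[simp]: "fin F \<Longrightarrow> fmul (basis []) F = (F :: ('c,'k::comm_ring_1) fm)"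
  by (simp add: fmul_basis_left flin_id)
lemma fmul_nil_right[simp]: "fin F \<Longrightarrow> fmul F (basis []) = (F :: ('c,'k::comm_ring_1) fm)"
  by (simp add: fmul_basis_right flin_id)

lemma fin_fzip[intro]:
  fixes f g :: "('c,'k::comm_ring_1) fm"
  shows "fin f \<Longrightarrow> fin g \<Longrightarrow> fin (fzip m f g)"
  unfolding fzip_def by (intro fin_flin; auto)

lemma sd_fzip[intro]:
  fixes f g :: "('c,'k::comm_ring_1) fm"
  shows "sd n f \<Longrightarrow> sd n g \<Longrightarrow> sd n (fzip m f g)"
  unfolding fzip_def by (intro sd_flin sd_basis; auto simp: sd_def)

lemma fzip_basis_right: "fzip m f (basis w) = flin f (\<lambda>xs. basis (map2 m xs w))"
  by (simp add: fzip_def)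
lemma fzip_basis_left: "fzip m (basis w) g = flin g (\<lambda>ys. basis (map2 m w ys))"
  by (simp add: fzip_def)

lemma fzip_flin_left:
  fixes f g :: "('c,'k::comm_ring_1) fm"
  assumes "fin f" "\<And>xs. f xs \<noteq> 0 \<Longrightarrow> fin (Psi xs)"
  shows "fzip m (flin f Psi) g = flin f (\<lambda>a. fzip m (Psi a) g)"
  using assms by (simp add: fzip_def flin_assoc)

lemma fzip_flin_right:
  fixes f g :: "('c,'k::comm_ring_1) fm"
  assumes "fin f" "\<And>xs. f xs \<noteq> 0 \<Longrightarrow> fin (Psi xs)"
  shows "fzip m g (flin f Psi) = flin f (\<lambda>a. fzip m g (Psi a))"
proof -
  have "fzip m g (flin f Psi) = flin g (\<lambda>a. flin f (\<lambda>x. flin (Psi x) (\<lambda>b. basis (map2 m a b))))"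
    using assms by (simp add: fzip_def flin_assoc)
  also have "\<dots> = flin f (\<lambda>x. flin g (\<lambda>a. flin (Psi x) (\<lambda>b. basis (map2 m a b))))"
    by (rule flin_swap)
  also have "\<dots> = flin f (\<lambda>a. fzip m g (Psi a))" by (simp add: fzip_def)
  finally show ?thesis .
qed

lemma fzip_fadd_left: "fin f \<Longrightarrow> fin g \<Longrightarrow>
   fzip m (fadd f g) h = fadd (fzip m f h) (fzip m g h :: ('c,'k::comm_ring_1) fm)"
  by (simp add: fzip_def flin_fadd)
lemma fzip_fsub_left: "fin f \<Longrightarrow> fin g \<Longrightarrow>
   fzip m (fsub f g) h = fsub (fzip m f h) (fzip m g h :: ('c,'k::comm_ring_1) fm)"
  by (simp add: fzip_def flin_fsub)
lemma fzip_fsmult_left: "fin f \<Longrightarrow>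
   fzip m (fsmult a f) h = fsmult a (fzip m f h :: ('c,'k::comm_ring_1) fm)"
  by (simp add: fzip_def flin_fsmult)
lemma fzip_fadd_right: "fin f \<Longrightarrow> fin g \<Longrightarrow>
   fzip m h (fadd f g) = fadd (fzip m h f) (fzip m h g :: ('c,'k::comm_ring_1) fm)"
  by (simp add: fzip_def flin_fadd flin_fadd_right)
lemma fzip_fsub_right: "fin f \<Longrightarrow> fin g \<Longrightarrow>
   fzip m h (fsub f g) = fsub (fzip m h f) (fzip m h g :: ('c,'k::comm_ring_1) fm)"
  by (simp add: fzip_def flin_fsub flin_fsub_right)
lemma fzip_fsmult_right: "fin f \<Longrightarrow>
   fzip m h (fsmult a f) = fsmult a (fzip m h f :: ('c,'k::comm_ring_1) fm)"
  by (simp add: fzip_def flin_fsmult flin_fsmult_right)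

lemma fzip_assoc:
  fixes f g h :: "('c,'k::comm_ring_1) fm"
  assumes "fin f" "fin g" "fin h" and massoc: "\<And>x y z. m (m x y) z = m x (m y z)"
  shows "fzip m (fzip m f g) h = fzip m f (fzip m g h)"
proof -
  have l: "map2 m (map2 m a b) c = map2 m a (map2 m b c)" for a b c
  proof (induction a arbitrary: b c)
    case (Cons x a) then show ?case by (cases b; cases c) (auto simp: massoc)
  qed simp
  have "fzip m (fzip m f g) h = flin f (\<lambda>a. flin g (\<lambda>b. flin h (\<lambda>c. basis (map2 m (map2 m a b) c))))"
    using assms by (simp add: fzip_def flin_assoc fin_flin)
  also have "\<dots> = fzip m f (fzip m g h)"
    using assms by (simp add: fzip_def flin_assoc fin_flin l)
  finally show ?thesis .
qed

lemma fzip_fmul: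
  fixes F1 F2 G1 G2 :: "('c,'k::comm_ring_1) fm"
  assumes "fin F1" "fin F2" "fin G1" "fin G2" "sd p F1" "sd p G1"
  shows "fzip m (fmul F1 F2) (fmul G1 G2) = fmul (fzip m F1 G1) (fzip m F2 G2)"
proof -
  have "fzip m (fmul F1 F2) (fmul G1 G2) =
    flin F1 (\<lambda>a1. flin F2 (\<lambda>a2. flin G1 (\<lambda>b1. flin G2 (\<lambda>b2. basis (map2 m (a1 @ a2) (b1 @ b2))))))"
    using assms by (simp add: fzip_def flin_fmul)
  also have "\<dots> = flin F1 (\<lambda>a1. flin F2 (\<lambda>a2. flin G1 (\<lambda>b1. flin G2 (\<lambda>b2. basis (map2 m a1 b1 @ map2 m a2 b2)))))"
    using assms(5,6) by (intro flin_cong) (auto simp: sd_def)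
  also have "\<dots> = flin F1 (\<lambda>a1. flin G1 (\<lambda>b1. flin F2 (\<lambda>a2. flin G2 (\<lambda>b2. basis (map2 m a1 b1 @ map2 m a2 b2)))))"
    by (intro flin_cong flin_swap)
  also have "\<dots> = fmul (fzip m F1 G1) (fzip m F2 G2)"
    using assms by (simp add: fzip_def fmul_flin flin_assoc fin_flin)
  finally show ?thesis .
qed



context
  fixes scale :: "'k::comm_ring_1 \<Rightarrow> 'c::ab_group_add \<Rightarrow> 'c"
begin

abbreviation MLR where "MLR \<equiv> mlrel scale"

lemma mlrel_fin: "f \<in> MLR \<Longrightarrow> fin f"
proof (induction rule: mlrel.induct)
  case (rel_add xs x y ys) then show ?case by (intro fin_fsub fin_fadd fin_basis)
next
  case (rel_smult xs a x ys) then show ?case by (intro fin_fsub fin_fsmult fin_basis)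
qed auto

lemma mlrel_sub: "f \<in> MLR \<Longrightarrow> g \<in> MLR \<Longrightarrow> fsub f g \<in> MLR"
proof -
  assume "f \<in> MLR" "g \<in> MLR"
  hence "fadd f (fsmult (-1) g) \<in> MLR" by (intro mlrel.rel_plus mlrel.rel_scale)
  moreover have "fadd f (fsmult (-1) g) = fsub f g" by (simp add: fadd_def fsmult_def fsub_def)
  ultimately show ?thesis by simp
qed

lemma mlrel_eq_zero: "f = fzero \<Longrightarrow> f \<in> MLR"
  using mlrel.rel_zero by simp

lemma mlrel_sum: "(\<And>i. i \<in> S \<Longrightarrow> g i \<in> MLR) \<Longrightarrow> (\<lambda>ys. \<Sum>i\<in>S. g i ys) \<in> MLR"
proof (induction S rule: infinite_finite_induct)
  case (infinite A) then show ?case by (simp add: mlrel_eq_zero fzero_def)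
next
  case empty then show ?case by (simp add: mlrel_eq_zero fzero_def)
next
  case (insert x F)
  have "(\<lambda>ys. \<Sum>i\<in>insert x F. g i ys) = fadd (g x) (\<lambda>ys. \<Sum>i\<in>F. g i ys)"
    using insert by (simp add: fadd_def)
  then show ?case using insert by (simp add: mlrel.rel_plus)
qed

lemma flin_mlrel: "(\<And>xs. f xs \<noteq> 0 \<Longrightarrow> Psi xs \<in> MLR) \<Longrightarrow> flin f Psi \<in> MLR"
proof -
  assume h: "\<And>xs. f xs \<noteq> 0 \<Longrightarrow> Psi xs \<in> MLR"
  have "flin f Psi = (\<lambda>ys. \<Sum>xs\<in>fsupp f. fsmult (f xs) (Psi xs) ys)"
    by (simp add: flin_def fsmult_def)
  also have "\<dots> \<in> MLR" by (rule mlrel_sum) (use h in \<open>auto intro: mlrel.rel_scale\<close>)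
  finally show ?thesis .
qed

abbreviation teqs (infix "\<approx>" 50) where "f \<approx> g \<equiv> teq scale f g"

lemma teq_refl[simp, intro]: "f \<approx> f"
  by (simp add: teq_def mlrel_eq_zero fsub_def fzero_def)

lemma teq_eq: "f = g \<Longrightarrow> f \<approx> g" by simp

lemma teq_sym: "f \<approx> g \<Longrightarrow> g \<approx> f"
proof -
  assume "f \<approx> g"
  hence "fsmult (-1) (fsub f g) \<in> MLR" unfolding teq_def by (rule mlrel.rel_scale)
  moreover have "fsmult (-1) (fsub f g) = fsub g f" by (simp add: fsmult_def fsub_def)
  ultimately show ?thesis by (simp add: teq_def)
qed

lemma teq_trans[trans]: "f \<approx> g \<Longrightarrow> g \<approx> h \<Longrightarrow> f \<approx> h"
proof -
  assume "f \<approx> g" "g \<approx> h"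
  hence "fadd (fsub f g) (fsub g h) \<in> MLR" unfolding teq_def by (rule mlrel.rel_plus)
  moreover have "fadd (fsub f g) (fsub g h) = fsub f h" by (simp add: fadd_def fsub_def)
  ultimately show ?thesis by (simp add: teq_def)
qed

lemma teq_trans_eq1[trans]: "f = g \<Longrightarrow> g \<approx> h \<Longrightarrow> f \<approx> h" by simp
lemma teq_trans_eq2[trans]: "f \<approx> g \<Longrightarrow> g = h \<Longrightarrow> f \<approx> h" by simp

lemma teq_fadd: "f \<approx> f' \<Longrightarrow> g \<approx> g' \<Longrightarrow> fadd f g \<approx> fadd f' g'"
proof -
  assume "f \<approx> f'" "g \<approx> g'"
  hence "fadd (fsub f f') (fsub g g') \<in> MLR" unfolding teq_def by (rule mlrel.rel_plus)
  moreover have "fadd (fsub f f') (fsub g g') = fsub (fadd f g) (fadd f' g')"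
    by (simp add: fadd_def fsub_def algebra_simps)
  ultimately show ?thesis by (simp add: teq_def)
qed

lemma teq_fsmult: "f \<approx> f' \<Longrightarrow> fsmult a f \<approx> fsmult a f'"
proof -
  assume "f \<approx> f'"
  hence "fsmult a (fsub f f') \<in> MLR" unfolding teq_def by (rule mlrel.rel_scale)
  moreover have "fsmult a (fsub f f') = fsub (fsmult a f) (fsmult a f')"
    by (simp add: fsmult_def fsub_def algebra_simps)
  ultimately show ?thesis by (simp add: teq_def)
qed

lemma teq_fsub: "f \<approx> f' \<Longrightarrow> g \<approx> g' \<Longrightarrow> fsub f g \<approx> fsub f' g'"
proof -
  assume "f \<approx> f'" "g \<approx> g'"
  hence "fsub (fsub f f') (fsub g g') \<in> MLR" unfolding teq_def by (rule mlrel_sub)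
  moreover have "fsub (fsub f f') (fsub g g') = fsub (fsub f g) (fsub f' g')"
    by (simp add: fsub_def algebra_simps)
  ultimately show ?thesis by (simp add: teq_def)
qed

lemma teq_zero_iff: "f \<approx> fzero \<longleftrightarrow> f \<in> MLR"
proof -
  have "fsub f fzero = f" by (simp add: fsub_def fzero_def)
  thus ?thesis by (simp add: teq_def)
qed

lemma teq_mlrel: "f \<approx> g \<Longrightarrow> g \<in> MLR \<Longrightarrow> f \<in> MLR"
  using teq_trans teq_zero_iff by blast

lemma teq_flin_right:
  "(\<And>xs. f xs \<noteq> 0 \<Longrightarrow> Psi xs \<approx> Phi xs) \<Longrightarrow> flin f Psi \<approx> flin f Phi"
  unfolding teq_def flin_fsub_right[symmetric] by (rule flin_mlrel)

subsection \<open>Multilinear families\<close>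

definition MLn :: "nat \<Rightarrow> ('c list \<Rightarrow> ('c,'k) fm) \<Rightarrow> bool" where
  "MLn N Psi \<longleftrightarrow>
    (\<forall>xs x y ys. length xs + length ys + 1 = N \<longrightarrow>
        Psi (xs @ (x + y) # ys) \<approx> fadd (Psi (xs @ x # ys)) (Psi (xs @ y # ys))) \<and>
    (\<forall>xs a x ys. length xs + length ys + 1 = N \<longrightarrow>
        Psi (xs @ scale a x # ys) \<approx> fsmult a (Psi (xs @ x # ys))) \<and>
    (\<forall>ws. length ws = N \<longrightarrow> fin (Psi ws))"

definition projn :: "nat \<Rightarrow> ('c,'k) fm \<Rightarrow> ('c,'k) fm" where
  "projn N f = (\<lambda>xs. if length xs = N then f xs else 0)"

lemma projn_sd: "sd N f \<Longrightarrow> projn N f = f"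
  by (auto simp: projn_def sd_alt)

lemma sd_projn: "sd N (projn N f)"
  by (auto simp: projn_def sd_alt)

lemma projn_basis: "projn N (basis w) = (if length w = N then basis w else fzero)"
  by (auto simp: projn_def basis_def fzero_def)

lemma projn_fadd: "projn N (fadd f g) = fadd (projn N f) (projn N g)"
  by (auto simp: projn_def fadd_def)
lemma projn_fsub: "projn N (fsub f g) = fsub (projn N f) (projn N g)"
  by (auto simp: projn_def fsub_def)
lemma projn_fsmult: "projn N (fsmult a f) = fsmult a (projn N f)"
  by (auto simp: projn_def fsmult_def)

lemma fin_projn: "fin f \<Longrightarrow> fin (projn N f)"
  by (rule finite_subset[of _ "fsupp f"]) (auto simp: projn_def split: if_splits)

lemma flin_projn_mlrel:
  assumes "f \<in> MLR" "MLn N Psi"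
  shows "flin (projn N f) Psi \<in> MLR"
  using assms(1)
proof (induction rule: mlrel.induct)
  case (rel_add xs x y ys)
  show ?case
  proof (cases "length xs + length ys + 1 = N")
    case True
    then show ?thesis using assms(2)
      by (simp add: projn_fsub projn_fadd projn_basis flin_fsub flin_fadd MLn_def teq_def)
  next
    case False
    then have "projn N (fsub (basis (xs @ (x + y) # ys)) (fadd (basis (xs @ x # ys)) (basis (xs @ y # ys)))) = fzero"
      by (auto simp: projn_def basis_def fzero_def fsub_def fadd_def)
    then show ?thesis by (simp add: mlrel_eq_zero)
  qed
next
  case (rel_smult xs a x ys)
  show ?case
  proof (cases "length xs + length ys + 1 = N")
    case True
    then show ?thesis using assms(2)
      by (simp add: projn_fsub projn_fsmult projn_basis flin_fsub flin_fsmult MLn_def teq_def)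
  next
    case False
    then have "projn N (fsub (basis (xs @ scale a x # ys)) (fsmult a (basis (xs @ x # ys)))) = fzero"
      by (auto simp: projn_def basis_def fzero_def fsub_def fsmult_def)
    then show ?thesis by (simp add: mlrel_eq_zero)
  qed
next
  case rel_zero
  have "projn N fzero = fzero" by (simp add: projn_def fzero_def)
  then show ?case by (simp add: mlrel.rel_zero)
next
  case (rel_plus f g)
  then show ?case
    by (simp add: projn_fadd flin_fadd fin_projn mlrel_fin mlrel.rel_plus)
next
  case (rel_scale f a)
  then show ?case
    by (simp add: projn_fsmult flin_fsmult fin_projn mlrel_fin mlrel.rel_scale)
qed

lemma flin_mlrel_N: "f \<in> MLR \<Longrightarrow> sd N f \<Longrightarrow> MLn N Psi \<Longrightarrow> flin f Psi \<in> MLR"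
  using flin_projn_mlrel projn_sd by metis

lemma teq_flin_left:
  assumes "f \<approx> g" "fin f" "fin g" "sd N f" "sd N g" "MLn N Psi"
  shows "flin f Psi \<approx> flin g Psi"
  using assms flin_mlrel_N[of "fsub f g" N Psi]
  by (simp add: teq_def flin_fsub sd_fsub)

definition MLall :: "('c list \<Rightarrow> ('c,'k) fm) \<Rightarrow> bool" where
  "MLall Psi \<longleftrightarrow> (\<forall>N. MLn N Psi)"

lemma flin_mlrel_all: "f \<in> MLR \<Longrightarrow> MLall Psi \<Longrightarrow> flin f Psi \<in> MLR"
proof -
  assume f: "f \<in> MLR" and P: "MLall Psi"
  have fin: "fin f" using f mlrel_fin by blast
  let ?L = "length ` fsupp f"
  have feq: "f = (\<lambda>xs. \<Sum>N\<in>?L. projn N f xs)"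
  proof
    fix xs
    have "(\<Sum>N\<in>?L. projn N f xs) = (if length xs \<in> ?L then f xs else 0)"
      unfolding projn_def using fin by (simp add: sum.delta)
    then show "f xs = (\<Sum>N\<in>?L. projn N f xs)" by auto
  qed
  hence "flin f Psi = flin (\<lambda>xs. \<Sum>N\<in>?L. projn N f xs) Psi" by simp
  also have "\<dots> = (\<lambda>ys. \<Sum>N\<in>?L. flin (projn N f) Psi ys)"
  proof
    fix ys
    have "flin (\<lambda>xs. \<Sum>N\<in>?L. projn N f xs) Psi ys = (\<Sum>xs\<in>fsupp f. (\<Sum>N\<in>?L. projn N f xs) * Psi xs ys)"
      by (rule flin_apply_superset) (use fin feq[symmetric] in auto)
    also have "\<dots> = (\<Sum>N\<in>?L. \<Sum>xs\<in>fsupp f. projn N f xs * Psi xs ys)"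
      by (simp add: sum_distrib_right sum.swap[of _ "fsupp f"])
    also have "\<dots> = (\<Sum>N\<in>?L. flin (projn N f) Psi ys)"
      by (rule sum.cong, simp, rule flin_apply_superset[symmetric]) (use fin in \<open>auto simp: projn_def split: if_splits\<close>)
    finally show "flin (\<lambda>xs. \<Sum>N\<in>?L. projn N f xs) Psi ys = (\<Sum>N\<in>?L. flin (projn N f) Psi ys)" .
  qed
  also have "\<dots> \<in> MLR"
    by (rule mlrel_sum) (use f P flin_projn_mlrel in \<open>auto simp: MLall_def\<close>)
  finally show ?thesis .
qed


lemma MLn_cong: "MLn N Phi \<Longrightarrow> (\<And>ws. length ws = N \<Longrightarrow> Psi ws = Phi ws) \<Longrightarrow> MLn N Psi"
  unfolding MLn_def by auto

lemma MLn_basis: "MLn N basis"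
  unfolding MLn_def teq_def by (auto intro: mlrel.intros)

lemma MLall_basis: "MLall basis"
  using MLn_basis by (simp add: MLall_def)

definition linE :: "('c \<Rightarrow> ('c,'k) fm) \<Rightarrow> bool" where
  "linE F \<longleftrightarrow> (\<forall>x y. F (x + y) \<approx> fadd (F x) (F y)) \<and> (\<forall>a x. F (scale a x) \<approx> fsmult a (F x)) \<and> (\<forall>x. fin (F x))"

lemma MLn_single: "linE F \<Longrightarrow> MLn 1 (\<lambda>ws. F (ws ! 0))"
  unfolding MLn_def linE_def by auto

lemma fmul_mlrel_left: "f \<in> MLR \<Longrightarrow> fin g \<Longrightarrow> fmul f g \<in> MLR"
proof -
  assume f: "f \<in> MLR" and g: "fin g"
  have "MLall (\<lambda>a. flin g (\<lambda>b. basis (a @ b)))"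
    unfolding MLall_def MLn_def
  proof (intro allI conjI impI)
    fix N xs x y ys
    show "flin g (\<lambda>b. basis ((xs @ (x + y) # ys) @ b)) \<approx>
          fadd (flin g (\<lambda>b. basis ((xs @ x # ys) @ b))) (flin g (\<lambda>b. basis ((xs @ y # ys) @ b)))"
      unfolding flin_fadd_right[symmetric] by (rule teq_flin_right) (auto simp: teq_def intro: mlrel.intros)
  next
    fix N xs a x ys
    show "flin g (\<lambda>b. basis ((xs @ scale a x # ys) @ b)) \<approx> fsmult a (flin g (\<lambda>b. basis ((xs @ x # ys) @ b)))"
      unfolding flin_fsmult_right[symmetric] by (rule teq_flin_right) (auto simp: teq_def intro: mlrel.intros)
  next
    fix N ws show "fin (flin g (\<lambda>b. basis (ws @ b)))" using g by auto
  qed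
  then show ?thesis using f g mlrel_fin by (simp add: fmul_flin flin_mlrel_all)
qed

lemma fmul_mlrel_right: "f \<in> MLR \<Longrightarrow> fin g \<Longrightarrow> fmul g f \<in> MLR"
proof -
  assume f: "f \<in> MLR" and g: "fin g"
  have "MLall (\<lambda>b. basis (a @ b))" for a
    unfolding MLall_def MLn_def teq_def
    by (auto intro: mlrel.intros simp del: append.simps append_assoc simp: append_assoc[symmetric])
  hence "flin f (\<lambda>b. basis (a @ b)) \<in> MLR" for a using f flin_mlrel_all by blast
  then show ?thesis using f g mlrel_fin by (simp add: fmul_flin flin_mlrel)
qed

lemma teq_fmul:
  assumes "f \<approx> f'" "g \<approx> g'" "fin f" "fin f'" "fin g" "fin g'"
  shows "fmul f g \<approx> fmul f' g'"
proof -
  have "fmul f g \<approx> fmul f' g"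
    using fmul_mlrel_left[of "fsub f f'" g] assms by (simp add: teq_def fmul_fsub_left)
  also have "fmul f' g \<approx> fmul f' g'"
    using fmul_mlrel_right[of "fsub g g'" f'] assms by (simp add: teq_def fmul_fsub_right)
  finally show ?thesis .
qed

lemma MLn_prod:
  assumes P1: "MLn p P1" and P2: "MLn q P2"
  shows "MLn (p + q) (\<lambda>vs. fmul (P1 (take p vs)) (P2 (drop p vs)))"
proof -
  have fin1: "fin (P1 w)" if "length w = p" for w using P1 that by (simp add: MLn_def)
  have fin2: "fin (P2 w)" if "length w = q" for w using P2 that by (simp add: MLn_def)
  {
    fix xs ys :: "'c list" and z :: 'c and C :: "('c \<Rightarrow> ('c,'k) fm) \<Rightarrow> ('c,'k) fm"
    assume len: "length xs + length ys + 1 = p + q"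
      and r1: "\<And>as bs. length as + length bs + 1 = p \<Longrightarrow>
               P1 (as @ z # bs) \<approx> C (\<lambda>w. P1 (as @ w # bs))"
      and r2: "\<And>as bs. length as + length bs + 1 = q \<Longrightarrow>
               P2 (as @ z # bs) \<approx> C (\<lambda>w. P2 (as @ w # bs))"
      and Cfin: "\<And>H. (\<And>w. fin (H w)) \<Longrightarrow> fin (C H)"
      and Cmul_l: "\<And>H G. (\<And>w. fin (H w)) \<Longrightarrow> fin G \<Longrightarrow> fmul (C H) G = C (\<lambda>w. fmul (H w) G)"
      and Cmul_r: "\<And>H G. (\<And>w. fin (H w)) \<Longrightarrow> fin G \<Longrightarrow> fmul G (C H) = C (\<lambda>w. fmul G (H w))"
    have "fmul (P1 (take p (xs @ z # ys))) (P2 (drop p (xs @ z # ys))) \<approx>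
          C (\<lambda>w. fmul (P1 (take p (xs @ w # ys))) (P2 (drop p (xs @ w # ys))))"
    proof (cases "length xs < p")
      case True
      define k where "k = p - length xs - 1"
      have pk: "p - length xs = Suc k" using True by (simp add: k_def)
      have t: "take p (xs @ w # ys) = xs @ w # take k ys" for w
        using True by (simp add: pk)
      have d: "drop p (xs @ w # ys) = drop k ys" for w
        using True by (simp add: pk)
      have lk: "length (take k ys) = k" "length xs + k + 1 = p" "length (drop k ys) = q"
        using True len by (auto simp: k_def)
      have "fmul (P1 (xs @ z # take k ys)) (P2 (drop k ys)) \<approx>
            fmul (C (\<lambda>w. P1 (xs @ w # take k ys))) (P2 (drop k ys))"
        using lk by (intro teq_fmul r1 teq_refl fin1 fin2 Cfin) auto
      also have "\<dots> = C (\<lambda>w. fmul (P1 (xs @ w # take k ys)) (P2 (drop k ys)))"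
        using lk by (intro Cmul_l fin1 fin2) auto
      finally show ?thesis unfolding t d .
    next
      case False
      have t: "take p (xs @ w # ys) = take p xs" for w using False by simp
      have d: "drop p (xs @ w # ys) = drop p xs @ w # ys" for w using False by simp
      have lk: "length (take p xs) = p" "length (drop p xs) + length ys + 1 = q"
        using False len by auto
      have "fmul (P1 (take p xs)) (P2 (drop p xs @ z # ys)) \<approx>
            fmul (P1 (take p xs)) (C (\<lambda>w. P2 (drop p xs @ w # ys)))"
        using lk by (intro teq_fmul r2 teq_refl fin1 fin2 Cfin) auto
      also have "\<dots> = C (\<lambda>w. fmul (P1 (take p xs)) (P2 (drop p xs @ w # ys)))"
        using lk by (intro Cmul_r fin1 fin2) auto
      finally show ?thesis unfolding t d .
    qed
  } note gen = this
  show ?thesis unfolding MLn_def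
  proof (intro allI conjI impI)
  fix xs ys :: "'c list" and x y :: 'c
  assume len: "length xs + length ys + 1 = p + q"
  show "fmul (P1 (take p (xs @ (x + y) # ys))) (P2 (drop p (xs @ (x + y) # ys))) \<approx>
       fadd (fmul (P1 (take p (xs @ x # ys))) (P2 (drop p (xs @ x # ys))))
        (fmul (P1 (take p (xs @ y # ys))) (P2 (drop p (xs @ y # ys))))"
    using gen[OF len, of "x + y" "\<lambda>H. fadd (H x) (H y)"] P1 P2
    by (auto simp: MLn_def fmul_fadd_left fmul_fadd_right)
next
  fix xs ys :: "'c list" and a and x :: 'c
  assume len: "length xs + length ys + 1 = p + q"
  show "fmul (P1 (take p (xs @ scale a x # ys))) (P2 (drop p (xs @ scale a x # ys))) \<approx>
        fsmult a (fmul (P1 (take p (xs @ x # ys))) (P2 (drop p (xs @ x # ys))))"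
    using gen[OF len, of "scale a x" "\<lambda>H. fsmult a (H x)"] P1 P2
    by (auto simp: MLn_def fmul_fsmult_left fmul_fsmult_right)
next
  fix ws :: "'c list" assume "length ws = p + q"
  then show "fin (fmul (P1 (take p ws)) (P2 (drop p ws)))"
    using P1 P2 by (intro fin_fmul) (auto simp: MLn_def)
qed
qed


lemma MLn_const0: "fin G \<Longrightarrow> MLn 0 (\<lambda>_. G)"
  unfolding MLn_def by auto

lemma MLn_flin:
  assumes "fin g" "\<And>b. g b \<noteq> 0 \<Longrightarrow> MLn N (Theta b)"
  shows "MLn N (\<lambda>ws. flin g (\<lambda>b. Theta b ws))"
  unfolding MLn_def
proof (intro allI conjI impI)
  fix xs ys :: "'c list" and x y :: 'c
  assume "length xs + length ys + 1 = N"
  then show "flin g (\<lambda>b. Theta b (xs @ (x + y) # ys)) \<approx>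
        fadd (flin g (\<lambda>b. Theta b (xs @ x # ys))) (flin g (\<lambda>b. Theta b (xs @ y # ys)))"
    unfolding flin_fadd_right[symmetric] using assms(2)
    by (intro teq_flin_right) (auto simp: MLn_def)
next
  fix xs ys :: "'c list" and a and x :: 'c
  assume "length xs + length ys + 1 = N"
  then show "flin g (\<lambda>b. Theta b (xs @ scale a x # ys)) \<approx> fsmult a (flin g (\<lambda>b. Theta b (xs @ x # ys)))"
    unfolding flin_fsmult_right[symmetric] using assms(2)
    by (intro teq_flin_right) (auto simp: MLn_def)
next
  fix ws :: "'c list" assume "length ws = N"
  then show "fin (flin g (\<lambda>b. Theta b ws))" using assms by (intro fin_flin) (auto simp: MLn_def)
qed

lemma split_len3:
  assumes "length bs = length xs + length ys + 1"
  obtains bs1 b bs2 where "bs = bs1 @ b # bs2" "length bs1 = length xs" "length bs2 = length ys"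
proof -
  have "bs = take (length xs) bs @ bs ! length xs # drop (Suc (length xs)) bs"
    using assms by (simp add: id_take_nth_drop)
  then show ?thesis using that[of "take (length xs) bs" "bs ! length xs" "drop (Suc (length xs)) bs"] assms
    by simp
qed

lemma map2_split:
  "length bs1 = length xs \<Longrightarrow> map2 m (xs @ z # ys) (bs1 @ b # bs2) = map2 m xs bs1 @ m z b # map2 m ys bs2"
  by simp

lemma map2_split':
  "length bs1 = length xs \<Longrightarrow> map2 m (bs1 @ b # bs2) (xs @ z # ys) = map2 m bs1 xs @ m b z # map2 m bs2 ys"
  by simp

lemma MLn_map2_right:
  assumes ml_add: "\<And>x y b. m (x + y) b = m x b + m y b"
    and ml_sc: "\<And>a x b. m (scale a x) b = scale a (m x b)"
    and len: "length bs = N"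
  shows "MLn N (\<lambda>ws. basis (map2 m ws bs))"
  unfolding MLn_def
proof (intro allI conjI impI)
  fix xs ys :: "'c list" and x y :: 'c
  assume l: "length xs + length ys + 1 = N"
  then obtain bs1 b bs2 where b: "bs = bs1 @ b # bs2" "length bs1 = length xs" "length bs2 = length ys"
    using split_len3 len by metis
  have eq: "map2 m (xs @ z # ys) bs = map2 m xs bs1 @ m z b # map2 m ys bs2" for z
    using b by simp
  show "basis (map2 m (xs @ (x + y) # ys) bs) \<approx>
        fadd (basis (map2 m (xs @ x # ys) bs)) (basis (map2 m (xs @ y # ys) bs))"
    unfolding eq ml_add teq_def by (rule mlrel.rel_add)
next
  fix xs ys :: "'c list" and a and x :: 'c
  assume l: "length xs + length ys + 1 = N"
  then obtain bs1 b bs2 where b: "bs = bs1 @ b # bs2" "length bs1 = length xs" "length bs2 = length ys"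
    using split_len3 len by metis
  have eq: "map2 m (xs @ z # ys) bs = map2 m xs bs1 @ m z b # map2 m ys bs2" for z
    using b by simp
  show "basis (map2 m (xs @ scale a x # ys) bs) \<approx> fsmult a (basis (map2 m (xs @ x # ys) bs))"
    unfolding eq ml_sc teq_def by (rule mlrel.rel_smult)
qed simp

lemma MLn_map2_left:
  assumes ml_add: "\<And>x y b. m b (x + y) = m b x + m b y"
    and ml_sc: "\<And>a x b. m b (scale a x) = scale a (m b x)"
    and len: "length bs = N"
  shows "MLn N (\<lambda>ws. basis (map2 m bs ws))"
  unfolding MLn_def
proof (intro allI conjI impI)
  fix xs ys :: "'c list" and x y :: 'c
  assume l: "length xs + length ys + 1 = N"
  then obtain bs1 b bs2 where b: "bs = bs1 @ b # bs2" "length bs1 = length xs" "length bs2 = length ys"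
    using split_len3 len by metis
  have eq: "map2 m bs (xs @ z # ys) = map2 m bs1 xs @ m b z # map2 m bs2 ys" for z
    using b by simp
  show "basis (map2 m bs (xs @ (x + y) # ys)) \<approx>
        fadd (basis (map2 m bs (xs @ x # ys))) (basis (map2 m bs (xs @ y # ys)))"
    unfolding eq ml_add teq_def by (rule mlrel.rel_add)
next
  fix xs ys :: "'c list" and a and x :: 'c
  assume l: "length xs + length ys + 1 = N"
  then obtain bs1 b bs2 where b: "bs = bs1 @ b # bs2" "length bs1 = length xs" "length bs2 = length ys"
    using split_len3 len by metis
  have eq: "map2 m bs (xs @ z # ys) = map2 m bs1 xs @ m b z # map2 m bs2 ys" for z
    using b by simp
  show "basis (map2 m bs (xs @ scale a x # ys)) \<approx> fsmult a (basis (map2 m bs (xs @ x # ys)))"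
    unfolding eq ml_sc teq_def by (rule mlrel.rel_smult)
qed simp

lemma teq_fzip_left:
  assumes ml_add: "\<And>x y b. m (x + y) b = m x b + m y b"
    and ml_sc: "\<And>a x b. m (scale a x) b = scale a (m x b)"
    and "f \<approx> f'" "fin f" "fin f'" "fin g" "sd N f" "sd N f'" "sd N g"
  shows "fzip m f g \<approx> fzip m f' g"
  unfolding fzip_def
proof (rule teq_flin_left[of f f' N])
  show "MLn N (\<lambda>xs. flin g (\<lambda>ys. basis (map2 m xs ys)))"
    by (rule MLn_flin) (use assms in \<open>auto intro: MLn_map2_right simp: sd_def\<close>)
qed (use assms in auto)

lemma fzip_swap: "fin f \<Longrightarrow> fin g \<Longrightarrow> fzip m f g = flin g (\<lambda>ys. flin f (\<lambda>xs. basis (map2 m xs ys)))"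
  unfolding fzip_def by (rule flin_swap)

lemma teq_fzip_right:
  assumes ml_add: "\<And>x y b. m b (x + y) = m b x + m b y"
    and ml_sc: "\<And>a x b. m b (scale a x) = scale a (m b x)"
    and "g \<approx> g'" "fin g" "fin g'" "fin f" "sd N g" "sd N g'" "sd N f"
  shows "fzip m f g \<approx> fzip m f g'"
  unfolding fzip_swap[OF assms(6,4)] fzip_swap[OF assms(6,5)]
proof (rule teq_flin_left[of g g' N])
  show "MLn N (\<lambda>ys. flin f (\<lambda>xs. basis (map2 m xs ys)))"
    by (rule MLn_flin) (use assms in \<open>auto intro: MLn_map2_left simp: sd_def\<close>)
qed (use assms in auto)

lemma linE_basis1: "linE (\<lambda>x. basis [x])"
  unfolding linE_def teq_def using mlrel.rel_add[where xs="[]" and ys="[]"] mlrel.rel_smult[where xs="[]" and ys="[]"] by auto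

lemma MLn2:
  assumes "linE F" "linE G"
  shows "MLn 2 (\<lambda>xs. fmul (F (xs ! 0)) (G (xs ! 1)))"
proof -
  have "MLn (1 + 1) (\<lambda>vs. fmul ((\<lambda>ws. F (ws ! 0)) (take 1 vs)) ((\<lambda>ws. G (ws ! 0)) (drop 1 vs)))"
    by (intro MLn_prod MLn_single assms)
  moreover have e: "(1::nat) + 1 = 2" by simp
  ultimately have h: "MLn 2 (\<lambda>vs. fmul (F (take 1 vs ! 0)) (G (drop 1 vs ! 0)))" by (simp only:)
  show ?thesis
  proof (rule MLn_cong[OF h])
    fix ws :: "'c list" assume "length ws = 2"
    then obtain a b where "ws = [a, b]" by (auto simp: numeral_2_eq_2 length_Suc_conv)
    then show "fmul (F (ws ! 0)) (G (ws ! 1)) = fmul (F (take 1 ws ! 0)) (G (drop 1 ws ! 0))" by simp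
  qed
qed

lemma MLn3:
  assumes "linE F" "linE G" "linE H"
  shows "MLn 3 (\<lambda>xs. fmul (fmul (F (xs ! 0)) (G (xs ! 1))) (H (xs ! 2)))"
proof -
  have "MLn (2 + 1) (\<lambda>vs. fmul ((\<lambda>xs. fmul (F (xs ! 0)) (G (xs ! 1))) (take 2 vs)) ((\<lambda>ws. H (ws ! 0)) (drop 2 vs)))"
    by (intro MLn_prod MLn_single MLn2 assms)
  moreover have e: "(2::nat) + 1 = 3" by simp
  ultimately have h: "MLn 3 (\<lambda>vs. fmul (fmul (F (take 2 vs ! 0)) (G (take 2 vs ! 1))) (H (drop 2 vs ! 0)))"
    by (simp only:)
  show ?thesis
  proof (rule MLn_cong[OF h])
    fix ws :: "'c list" assume "length ws = 3"
    then obtain a b c where "ws = [a, b, c]" by (auto simp: numeral_3_eq_3 length_Suc_conv)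
    then show "fmul (fmul (F (ws ! 0)) (G (ws ! 1))) (H (ws ! 2)) =
      fmul (fmul (F (take 2 ws ! 0)) (G (take 2 ws ! 1))) (H (drop 2 ws ! 0))" by simp
  qed
qed

end


declare fin_fmul[simp] fin_fzip[simp]

lemma flin_fmul_basis_left:
  fixes F :: "('c,'k::comm_ring_1) fm"
  shows "fin F \<Longrightarrow> flin (fmul (basis a) F) Theta = flin F (\<lambda>w. Theta (a @ w))"
  by (simp add: flin_fmul)

lemma flin_fmul_basis_right:
  fixes F :: "('c,'k::comm_ring_1) fm"
  shows "fin F \<Longrightarrow> flin (fmul F (basis b)) Theta = flin F (\<lambda>w. Theta (w @ b))"
  by (simp add: flin_fmul)

lemma fmul_nil_smult_left:
  fixes F :: "('c,'k::comm_ring_1) fm"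
  shows "fin F \<Longrightarrow> fmul (fsmult e (basis [])) F = fsmult e F"
  by (simp add: fmul_fsmult_left)

lemma fmul_nil_smult_right:
  fixes F :: "('c,'k::comm_ring_1) fm"
  shows "fin F \<Longrightarrow> fmul F (fsmult e (basis [])) = fsmult e F"
  by (simp add: fmul_fsmult_right)

lemma len2_cases: "length ws = 2 \<Longrightarrow> (\<And>a b. ws = [a, b] \<Longrightarrow> P) \<Longrightarrow> P"
  by (auto simp: numeral_2_eq_2 length_Suc_conv)

lemma nat012_induct[case_names zero one suc2]:
  assumes "P 0" "P (Suc 0)" "\<And>k. P (Suc k) \<Longrightarrow> P (Suc (Suc k))"
  shows "P n"
proof (induction n rule: less_induct)
  case (less n) then show ?case using assms
  proof (cases n)
    case (Suc m) then show ?thesis using less assms by (cases m) auto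
  qed simp
qed

locale BA =
  fixes scale :: "'k::comm_ring_1 \<Rightarrow> 'c::ab_group_add \<Rightarrow> 'c"
    and mult :: "'c \<Rightarrow> 'c \<Rightarrow> 'c" and u :: 'c
    and Delta :: "'c \<Rightarrow> ('c, 'k) fm" and eps :: "'c \<Rightarrow> 'k"
  assumes bialg: "bialgebra scale mult u Delta eps"
begin

abbreviation teqB (infix "\<approx>" 50) where "f \<approx> g \<equiv> teq scale f g"
abbreviation "D \<equiv> iterD Delta eps"

lemma mult_add_l: "mult (x + y) z = mult x z + mult y z" using bialg by (simp add: bialgebra_def)
lemma mult_add_r: "mult x (y + z) = mult x y + mult x z" using bialg by (simp add: bialgebra_def)
lemma mult_sc_l: "mult (scale a x) y = scale a (mult x y)" using bialg by (simp add: bialgebra_def)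
lemma mult_sc_r: "mult x (scale a y) = scale a (mult x y)" using bialg by (simp add: bialgebra_def)
lemma mult_assoc: "mult (mult x y) z = mult x (mult y z)" using bialg by (simp add: bialgebra_def)
lemma unit_l[simp]: "mult u x = x" using bialg by (simp add: bialgebra_def)
lemma unit_r[simp]: "mult x u = x" using bialg by (simp add: bialgebra_def)
lemma Delta_hom: "hom_deg 2 (Delta c)" using bialg by (simp add: bialgebra_def)
lemma Delta_fin[simp]: "fin (Delta c)" using Delta_hom by (simp add: hom_deg_iff)
lemma Delta_sd[simp]: "sd 2 (Delta c)" using Delta_hom by (simp add: hom_deg_iff)
lemma Delta_add: "Delta (x + y) \<approx> fadd (Delta x) (Delta y)" using bialg by (simp add: bialgebra_def)
lemma Delta_sc: "Delta (scale a x) \<approx> fsmult a (Delta x)" using bialg by (simp add: bialgebra_def)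
lemma eps_add: "eps (x + y) = eps x + eps y" using bialg by (simp add: bialgebra_def)
lemma eps_sc: "eps (scale a x) = a * eps x" using bialg by (simp add: bialgebra_def)
lemma coassoc: "flin (Delta c) (\<lambda>xs. fmul (Delta (xs ! 0)) (basis [xs ! 1])) \<approx>
                    flin (Delta c) (\<lambda>xs. fmul (basis [xs ! 0]) (Delta (xs ! 1)))"
  using bialg by (simp add: bialgebra_def)
lemma counit_l: "flin (Delta c) (\<lambda>xs. fsmult (eps (xs ! 0)) (basis [xs ! 1])) \<approx> basis [c]"
  using bialg by (simp add: bialgebra_def)
lemma counit_r: "flin (Delta c) (\<lambda>xs. fsmult (eps (xs ! 1)) (basis [xs ! 0])) \<approx> basis [c]"
  using bialg by (simp add: bialgebra_def)
lemma Delta_mult: "Delta (mult x y) \<approx> fzip mult (Delta x) (Delta y)"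
  using bialg by (simp add: bialgebra_def)
lemma Delta_u: "Delta u \<approx> basis [u, u]" using bialg by (simp add: bialgebra_def)
lemma eps_mult: "eps (mult x y) = eps x * eps y" using bialg by (simp add: bialgebra_def)
lemma eps_u: "eps u = 1" using bialg by (simp add: bialgebra_def)

lemma Delta_supp: "Delta c xs \<noteq> 0 \<Longrightarrow> length xs = 2"
  using Delta_sd by (simp add: sd_def)

lemma linE_Delta: "linE scale Delta"
  by (simp add: linE_def Delta_add Delta_sc)

lemma D_hom: "fin (D n c) \<and> sd n (D n c)"
proof (induction n arbitrary: c rule: nat012_induct)
  case zero then show ?case by (auto intro: sd_basis)
next
  case one then show ?case by (auto intro: sd_basis)
next
  case (suc2 k)
  note 3 = suc2
  show ?case
  proof
    show "fin (D (Suc (Suc k)) c)" using 3 by (auto intro!: fin_flin fin_fmul)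
    show "sd (Suc (Suc k)) (D (Suc (Suc k)) c)"
      unfolding iterD.simps
    proof (rule sd_flin)
      fix xs assume "Delta c xs \<noteq> 0"
      have "sd (1 + Suc k) (fmul (basis [xs ! 0]) (D (Suc k) (xs ! 1)))"
        using 3 by (intro sd_fmul sd_basis) auto
      then show "sd (Suc (Suc k)) (fmul (basis [xs ! 0]) (D (Suc k) (xs ! 1)))" by simp
    qed
  qed
qed

lemma D_fin[simp]: "fin (D n c)" using D_hom by blast
lemma D_sd[simp]: "sd n (D n c)" using D_hom by blast

lemma D0: "D 0 c = fsmult (eps c) (basis [])" by simp
lemma D1: "D (Suc 0) c = basis [c]" by simp


lemma MLn_fin: "MLn scale N Psi \<Longrightarrow> length ws = N \<Longrightarrow> fin (Psi ws)"
  by (simp add: MLn_def)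

lemma teq_flin_Delta:
  assumes "MLn scale 2 Psi" "f \<approx> g" "fin f" "fin g" "sd 2 f" "sd 2 g"
  shows "flin f Psi \<approx> flin g Psi"
  using teq_flin_left assms by blast

lemma linE_flin_Delta:
  assumes P: "MLn scale 2 Psi"
  shows "linE scale (\<lambda>c. flin (Delta c) Psi)"
  unfolding linE_def
proof (intro allI conjI)
  fix x y
  have "flin (Delta (x + y)) Psi \<approx> flin (fadd (Delta x) (Delta y)) Psi"
    by (rule teq_flin_left[OF Delta_add _ _ _ _ P]) auto
  also have "\<dots> = fadd (flin (Delta x) Psi) (flin (Delta y) Psi)" by (simp add: flin_fadd)
  finally show "flin (Delta (x + y)) Psi \<approx> fadd (flin (Delta x) Psi) (flin (Delta y) Psi)" .
next
  fix a x
  have "flin (Delta (scale a x)) Psi \<approx> flin (fsmult a (Delta x)) Psi"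
    by (rule teq_flin_left[OF Delta_sc _ _ _ _ P]) auto
  also have "\<dots> = fsmult a (flin (Delta x) Psi)" by (simp add: flin_fsmult)
  finally show "flin (Delta (scale a x)) Psi \<approx> fsmult a (flin (Delta x) Psi)" .
next
  fix x
  show "fin (flin (Delta x) Psi)"
    using P by (intro fin_flin) (auto dest: Delta_supp simp: MLn_def)
qed

lemma D_lin: "linE scale (D n)"
proof (induction n rule: nat012_induct)
  case zero
  show ?case unfolding linE_def
    by (auto simp: eps_add eps_sc fsmult_def fadd_def distrib_right mult.assoc
         simp del: fin_fsmult intro!: fin_fsmult[unfolded fsmult_def])
next
  case one
  show ?case using linE_basis1 by simp
next
  case (suc2 k)
  have "MLn scale 2 (\<lambda>xs. fmul (basis [xs ! 0]) (D (Suc k) (xs ! 1)))"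
    by (rule MLn2[OF linE_basis1 suc2])
  from linE_flin_Delta[OF this] show ?case by simp
qed

lemma D_single: "MLn scale 1 (\<lambda>w. D n (w ! 0))"
  by (rule MLn_single[OF D_lin])


lemma fin_flin_Delta[intro]: "(\<And>xs. length xs = 2 \<Longrightarrow> fin (Psi xs)) \<Longrightarrow> fin (flin (Delta c) Psi)"
  by (intro fin_flin) (auto dest: Delta_supp)

lemma sd_flin_Delta[intro]: "(\<And>xs. length xs = 2 \<Longrightarrow> sd n (Psi xs)) \<Longrightarrow> sd n (flin (Delta c) Psi)"
  by (intro sd_flin) (auto dest: Delta_supp)

lemma sd_fmul': "fin f \<Longrightarrow> fin g \<Longrightarrow> sd p f \<Longrightarrow> sd q g \<Longrightarrow> n = p + q \<Longrightarrow> sd n (fmul f g)"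
  using sd_fmul by blast

lemma D_split: "D (p + q) c \<approx> flin (Delta c) (\<lambda>xs. fmul (D p (xs ! 0)) (D q (xs ! 1)))"
proof (induction p arbitrary: q c rule: nat012_induct)
  case zero
  have "D q c = flin (basis [c]) (\<lambda>w. D q (w ! 0))" by simp
  also have "\<dots> \<approx> flin (flin (Delta c) (\<lambda>xs. fsmult (eps (xs ! 0)) (basis [xs ! 1]))) (\<lambda>w. D q (w ! 0))"
    by (rule teq_flin_left[OF teq_sym[OF counit_l] _ _ _ _ D_single]) (auto intro!: sd_flin_Delta sd_fsmult sd_basis)
  also have "\<dots> = flin (Delta c) (\<lambda>xs. fsmult (eps (xs ! 0)) (D q (xs ! 1)))"
    by (simp add: flin_assoc flin_fsmult)
  also have "\<dots> = flin (Delta c) (\<lambda>xs. fmul (D 0 (xs ! 0)) (D q (xs ! 1)))"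
    by (simp add: fmul_fsmult_left)
  finally show ?case by simp
next
  case one
  show ?case
  proof (cases q)
    case 0
    have "D (Suc 0 + q) c = basis [c]" using 0 by simp
    also have "\<dots> \<approx> flin (Delta c) (\<lambda>xs. fsmult (eps (xs ! 1)) (basis [xs ! 0]))"
      by (rule teq_sym[OF counit_r])
    also have "\<dots> = flin (Delta c) (\<lambda>xs. fmul (D (Suc 0) (xs ! 0)) (D q (xs ! 1)))"
      using 0 by (simp add: fmul_fsmult_right)
    finally show ?thesis .
  next
    case (Suc k) then show ?thesis by simp
  qed
next
  case (suc2 p')
  let ?T = "\<lambda>zs. fmul (fmul (basis [zs ! 0]) (D (Suc p') (zs ! 1))) (D q (zs ! 2))"
  have ML3: "MLn scale 3 ?T" by (rule MLn3[OF linE_basis1 D_lin D_lin])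
  have "D (Suc (Suc p') + q) c = flin (Delta c) (\<lambda>xs. fmul (basis [xs ! 0]) (D (Suc p' + q) (xs ! 1)))"
    by simp
  also have "\<dots> \<approx> flin (Delta c) (\<lambda>xs. fmul (basis [xs ! 0])
        (flin (Delta (xs ! 1)) (\<lambda>ys. fmul (D (Suc p') (ys ! 0)) (D q (ys ! 1)))))"
    by (intro teq_flin_right teq_fmul suc2 teq_refl) (auto intro!: fin_flin_Delta fin_fmul)
  also have "\<dots> = flin (Delta c) (\<lambda>xs. flin (fmul (basis [xs ! 0]) (Delta (xs ! 1))) ?T)"
  proof (rule flin_cong)
    fix xs
    have "fmul (basis [xs ! 0]) (flin (Delta (xs ! 1)) (\<lambda>ys. fmul (D (Suc p') (ys ! 0)) (D q (ys ! 1))))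
        = flin (Delta (xs ! 1)) (\<lambda>ys. fmul (basis [xs ! 0]) (fmul (D (Suc p') (ys ! 0)) (D q (ys ! 1))))"
      by (rule fmul_flin_right) auto
    also have "\<dots> = flin (Delta (xs ! 1)) (\<lambda>w. ?T ([xs ! 0] @ w))"
      by (rule flin_cong) (auto dest!: Delta_supp elim!: len2_cases simp: fmul_assoc)
    also have "\<dots> = flin (fmul (basis [xs ! 0]) (Delta (xs ! 1))) ?T"
      by (rule flin_fmul_basis_left[symmetric]) simp
    finally show "fmul (basis [xs ! 0]) (flin (Delta (xs ! 1)) (\<lambda>ys. fmul (D (Suc p') (ys ! 0)) (D q (ys ! 1))))
        = flin (fmul (basis [xs ! 0]) (Delta (xs ! 1))) ?T" .
  qed
  also have "\<dots> = flin (flin (Delta c) (\<lambda>xs. fmul (basis [xs ! 0]) (Delta (xs ! 1)))) ?T"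
    by (rule flin_assoc[symmetric]) auto
  also have "\<dots> \<approx> flin (flin (Delta c) (\<lambda>xs. fmul (Delta (xs ! 0)) (basis [xs ! 1]))) ?T"
    apply (rule teq_flin_left[OF teq_sym[OF coassoc] _ _ _ _ ML3])
       apply (auto intro!: fin_flin_Delta fin_fmul)[2]
     apply (rule sd_flin_Delta, rule sd_fmul'[where p=1 and q=2]; auto intro: sd_basis)
    apply (rule sd_flin_Delta, rule sd_fmul'[where p=2 and q=1]; auto intro: sd_basis)
    done
  also have "\<dots> = flin (Delta c) (\<lambda>xs. flin (fmul (Delta (xs ! 0)) (basis [xs ! 1])) ?T)"
    by (rule flin_assoc) auto
  also have "\<dots> = flin (Delta c) (\<lambda>xs. fmul (D (Suc (Suc p')) (xs ! 0)) (D q (xs ! 1)))"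
  proof (rule flin_cong)
    fix xs
    have "flin (fmul (Delta (xs ! 0)) (basis [xs ! 1])) ?T = flin (Delta (xs ! 0)) (\<lambda>w. ?T (w @ [xs ! 1]))"
      by (rule flin_fmul_basis_right) simp
    also have "\<dots> = flin (Delta (xs ! 0)) (\<lambda>w. fmul (fmul (basis [w ! 0]) (D (Suc p') (w ! 1))) (D q (xs ! 1)))"
      by (rule flin_cong) (auto dest!: Delta_supp elim!: len2_cases)
    also have "\<dots> = fmul (flin (Delta (xs ! 0)) (\<lambda>w. fmul (basis [w ! 0]) (D (Suc p') (w ! 1)))) (D q (xs ! 1))"
      by (rule fmul_flin_left[symmetric]) auto
    finally show "flin (fmul (Delta (xs ! 0)) (basis [xs ! 1])) ?T = fmul (D (Suc (Suc p')) (xs ! 0)) (D q (xs ! 1))"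
      by simp
  qed
  finally show ?case .
qed


lemma MLn_Psi:
  assumes G: "linE scale G"
  shows "MLn scale (j + 1 + k) (\<lambda>vs. fmul (fmul (basis (take j vs)) (G (vs ! j))) (basis (drop (Suc j) vs)))"
proof -
  have h1: "MLn scale (j + 1) (\<lambda>ws. fmul (basis (take j ws)) ((\<lambda>w. G (w ! 0)) (drop j ws)))"
    by (intro MLn_prod MLn_basis MLn_single G)
  have "MLn scale (j + 1 + k) (\<lambda>vs. fmul ((\<lambda>ws. fmul (basis (take j ws)) ((\<lambda>w. G (w ! 0)) (drop j ws))) (take (j + 1) vs)) (basis (drop (j + 1) vs)))"
    by (intro MLn_prod h1 MLn_basis)
  then show ?thesis
    by (rule MLn_cong) (simp add: min_def)
qed

abbreviation Psi where
  "Psi j G \<equiv> (\<lambda>vs. fmul (fmul (basis (take j vs)) (G (vs ! j))) (basis (drop (Suc j) vs)))"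

lemma fin_Psi[simp]: "(\<And>x. fin (G x)) \<Longrightarrow> fin (Psi j G vs)" by (intro fin_fmul fin_basis)

lemma Psi_cons: "(\<And>x. fin (G x)) \<Longrightarrow> Psi (Suc j) G (x # w) = fmul (basis [x]) (Psi j G w)"
proof -
  assume f: "\<And>x. fin (G x)"
  have "basis (x # take j w) = fmul (basis [x]) (basis (take j w))" by simp
  then have "Psi (Suc j) G (x # w) = fmul (fmul (fmul (basis [x]) (basis (take j w))) (G (w ! j))) (basis (drop (Suc j) w))"
    by simp
  also have "\<dots> = fmul (basis [x]) (Psi j G w)" using f by (simp only: fmul_assoc fin_fmul fin_basis)
  finally show ?thesis .
qed

lemma basis_cons_fmul:
  "fin g \<Longrightarrow> fin b \<Longrightarrow> fmul (fmul (basis (x # t)) g) b = fmul (basis [x]) (fmul (fmul (basis t) g) b)"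
proof -
  assume "fin g" "fin b"
  have eq: "basis (x # t) = fmul (basis [x]) (basis t)" by simp
  show ?thesis using \<open>fin g\<close> \<open>fin b\<close> by (simp only: eq fmul_assoc fin_fmul fin_basis)
qed

lemma D_coa: "D (j + n + k) c \<approx> flin (D (j + 1 + k) c) (Psi j (D n))"
proof (induction j arbitrary: c)
  case 0
  have "D (0 + n + k) c \<approx> flin (Delta c) (\<lambda>xs. fmul (D n (xs ! 0)) (D k (xs ! 1)))"
    using D_split by simp
  also have "\<dots> = flin (Delta c) (\<lambda>xs. flin (fmul (basis [xs ! 0]) (D k (xs ! 1))) (Psi 0 (D n)))"
  proof (rule flin_cong)
    fix xs
    have "flin (fmul (basis [xs ! 0]) (D k (xs ! 1))) (Psi 0 (D n)) =
          flin (D k (xs ! 1)) (\<lambda>w. fmul (D n (xs ! 0)) (basis w))"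
      by (simp add: flin_fmul_basis_left)
    also have "\<dots> = fmul (D n (xs ! 0)) (flin (D k (xs ! 1)) basis)"
      by (rule fmul_flin_right[symmetric]) auto
    finally show "fmul (D n (xs ! 0)) (D k (xs ! 1)) = flin (fmul (basis [xs ! 0]) (D k (xs ! 1))) (Psi 0 (D n))"
      by (simp add: flin_id)
  qed
  also have "\<dots> = flin (flin (Delta c) (\<lambda>xs. fmul (D 1 (xs ! 0)) (D k (xs ! 1)))) (Psi 0 (D n))"
    by (subst flin_assoc) auto
  also have "\<dots> \<approx> flin (D (0 + 1 + k) c) (Psi 0 (D n))"
    unfolding add_0
    apply (rule teq_flin_left[OF teq_sym[OF D_split[of 1 k c]] _ _ _ _ MLn_Psi[where j=0 and k=k and G="D n", OF D_lin, unfolded add_0]])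
    by (auto intro!: fin_flin_Delta fin_fmul sd_flin_Delta sd_fmul'[where p=1 and q=k] intro: sd_basis)
  finally show ?case .
next
  case (Suc j)
  have e1: "Suc j + n + k = 1 + (j + n + k)" by simp
  have e2: "Suc j + 1 + k = 1 + (j + 1 + k)" by simp
  have "D (Suc j + n + k) c \<approx> flin (Delta c) (\<lambda>xs. fmul (D 1 (xs ! 0)) (D (j + n + k) (xs ! 1)))"
    unfolding e1 by (rule D_split)
  also have "\<dots> \<approx> flin (Delta c) (\<lambda>xs. fmul (basis [xs ! 0]) (flin (D (j + 1 + k) (xs ! 1)) (Psi j (D n))))"
    by (intro teq_flin_right teq_fmul Suc teq_refl) (auto intro!: fin_flin)
  also have "\<dots> = flin (Delta c) (\<lambda>xs. flin (fmul (basis [xs ! 0]) (D (j + 1 + k) (xs ! 1))) (Psi (Suc j) (D n)))"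
  proof (rule flin_cong)
    fix xs
    have "flin (fmul (basis [xs ! 0]) (D (j + 1 + k) (xs ! 1))) (Psi (Suc j) (D n))
        = flin (D (j + 1 + k) (xs ! 1)) (\<lambda>w. fmul (basis [xs ! 0]) (Psi j (D n) w))"
      by (simp add: flin_fmul_basis_left basis_cons_fmul del: fmul_basis_basis)
    also have "\<dots> = fmul (basis [xs ! 0]) (flin (D (j + 1 + k) (xs ! 1)) (Psi j (D n)))"
      by (rule fmul_flin_right[symmetric]) auto
    finally show "fmul (basis [xs ! 0]) (flin (D (j + 1 + k) (xs ! 1)) (Psi j (D n))) =
       flin (fmul (basis [xs ! 0]) (D (j + 1 + k) (xs ! 1))) (Psi (Suc j) (D n))" by simp
  qed
  also have "\<dots> = flin (flin (Delta c) (\<lambda>xs. fmul (D 1 (xs ! 0)) (D (j + 1 + k) (xs ! 1)))) (Psi (Suc j) (D n))"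
    by (subst flin_assoc) auto
  also have "\<dots> \<approx> flin (D (Suc j + 1 + k) c) (Psi (Suc j) (D n))"
    unfolding e2
    apply (rule teq_flin_left[OF teq_sym[OF D_split[of 1 "j + 1 + k" c]] _ _ _ _ MLn_Psi[where j="Suc j" and k=k and G="D n", OF D_lin, unfolded e2]])
    by (auto intro!: fin_flin_Delta fin_fmul sd_flin_Delta sd_fmul'[where p=1 and q="j+1+k"] intro: sd_basis)
  finally show ?case .
qed


lemma flin_fzip:
  fixes f g :: "('c,'k) fm"
  assumes "fin f" "fin g"
  shows "flin (fzip m f g) Theta = flin f (\<lambda>a. flin g (\<lambda>b. Theta (map2 m a b)))"
  using assms by (simp add: fzip_def flin_assoc fin_flin)

lemma D2: "D 2 c = Delta c"
proof -
  have "D 2 c = flin (Delta c) (\<lambda>xs. fmul (basis [xs ! 0]) (basis [xs ! 1]))"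
    by (simp add: numeral_2_eq_2)
  also have "\<dots> = flin (Delta c) basis"
    by (rule flin_cong) (auto dest!: Delta_supp elim!: len2_cases)
  finally show ?thesis by (simp add: flin_id)
qed

lemma fzip_basis1: "fzip mult (basis [a]) (basis [b]) = basis [mult a b]"
  by (simp add: fzip_basis_left)

lemma D_mult: "D n (mult v a) \<approx> fzip mult (D n v) (D n a)"
proof (induction n arbitrary: v a rule: nat012_induct)
  case zero
  have "fzip mult (fsmult (eps v) (basis [])) (fsmult (eps a) (basis [])) = fsmult (eps a) (fsmult (eps v) (basis []))"
    by (simp add: fzip_fsmult_left fzip_fsmult_right fzip_basis_left)
  also have "\<dots> = fsmult (eps (mult v a)) (basis [])" by (simp add: fsmult_def eps_mult mult.commute mult.left_commute)
  finally show ?case by simp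
next
  case one
  show ?case by (simp add: fzip_basis_left)
next
  case (suc2 k)
  let ?P = "\<lambda>xs. fmul (basis [xs ! 0]) (D (Suc k) (xs ! 1))"
  have ML2: "MLn scale 2 ?P" by (rule MLn2[OF linE_basis1 D_lin])
  have "D (Suc (Suc k)) (mult v a) = flin (Delta (mult v a)) ?P" by simp
  also have "\<dots> \<approx> flin (fzip mult (Delta v) (Delta a)) ?P"
    by (rule teq_flin_left[OF Delta_mult _ _ _ _ ML2]) auto
  also have "\<dots> = flin (Delta v) (\<lambda>b. flin (Delta a) (\<lambda>c. ?P (map2 mult b c)))"
    by (simp add: flin_fzip)
  also have "\<dots> \<approx> flin (Delta v) (\<lambda>b. flin (Delta a) (\<lambda>c. fzip mult (?P b) (?P c)))"
  proof (intro teq_flin_right)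
    fix b c assume "Delta v b \<noteq> 0" "Delta a c \<noteq> 0"
    then obtain b0 b1 c0 c1 where bc: "b = [b0, b1]" "c = [c0, c1]"
      by (auto dest!: Delta_supp elim!: len2_cases)
    have "?P (map2 mult b c) = fmul (basis [mult b0 c0]) (D (Suc k) (mult b1 c1))" using bc by simp
    also have "\<dots> \<approx> fmul (basis [mult b0 c0]) (fzip mult (D (Suc k) b1) (D (Suc k) c1))"
      by (intro teq_fmul teq_refl suc2) auto
    also have "\<dots> = fzip mult (?P b) (?P c)"
      using bc by (simp add: fzip_fmul[where p=1] fzip_basis1 sd_basis)
    finally show "?P (map2 mult b c) \<approx> fzip mult (?P b) (?P c)" .
  qed
  also have "\<dots> = fzip mult (flin (Delta v) ?P) (flin (Delta a) ?P)"
    by (subst fzip_flin_left) (auto simp: fzip_flin_right fin_flin)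
  finally show ?case by simp
qed

lemma D_unit: "D n u \<approx> basis (replicate n u)"
proof (induction n rule: nat012_induct)
  case zero
  show ?case by (simp add: eps_u fsmult_def)
next
  case one
  show ?case by simp
next
  case (suc2 k)
  let ?P = "\<lambda>xs. fmul (basis [xs ! 0]) (D (Suc k) (xs ! 1))"
  have ML2: "MLn scale 2 ?P" by (rule MLn2[OF linE_basis1 D_lin])
  have "D (Suc (Suc k)) u = flin (Delta u) ?P" by simp
  also have "\<dots> \<approx> flin (basis [u, u]) ?P"
    by (rule teq_flin_left[OF Delta_u _ _ _ _ ML2]) (auto intro: sd_basis)
  also have "\<dots> = fmul (basis [u]) (D (Suc k) u)" by simp
  also have "\<dots> \<approx> fmul (basis [u]) (basis (replicate (Suc k) u))"
    by (intro teq_fmul teq_refl suc2) auto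
  also have "\<dots> = basis (replicate (Suc (Suc k)) u)" by simp
  finally show ?case .
qed

end


context BA
begin

abbreviation "E \<equiv> extmap mult Delta eps"

lemma E_def: "E N x c = fzip mult (D N c) x" by (simp add: extmap_def)

lemma E_fin[simp]: "fin x \<Longrightarrow> fin (E N x c)" by (simp add: E_def)
lemma E_sd: "sd N x \<Longrightarrow> sd N (E N x c)" by (simp add: E_def sd_fzip)

lemma E_fadd: "fin x \<Longrightarrow> fin y \<Longrightarrow> E N (fadd x y) c = fadd (E N x c) (E N y c)"
  by (simp add: E_def fzip_fadd_right)
lemma E_fsmult: "fin x \<Longrightarrow> E N (fsmult a x) c = fsmult a (E N x c)"
  by (simp add: E_def fzip_fsmult_right)
lemma E_fzero[simp]: "E N fzero c = fzero"
  by (simp add: E_def fzip_def)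
lemma E_flin: "fin (x :: ('c,'k) fm) \<Longrightarrow> (\<And>as. x as \<noteq> 0 \<Longrightarrow> fin (Phi as)) \<Longrightarrow> E N (flin x Phi) c = flin x (\<lambda>as. E N (Phi as) c)"
  unfolding E_def by (rule fzip_flin_right)

lemma E_teq: "x \<approx> y \<Longrightarrow> fin x \<Longrightarrow> fin y \<Longrightarrow> sd N x \<Longrightarrow> sd N y \<Longrightarrow> E N x c \<approx> E N y c"
  unfolding E_def by (rule teq_fzip_right[where m=mult, OF mult_add_r mult_sc_r]) auto

lemma E_mlrel: "x \<in> mlrel scale \<Longrightarrow> sd N x \<Longrightarrow> E N x c \<in> mlrel scale"
proof -
  assume x: "x \<in> mlrel scale" "sd N x"
  have "E N x c \<approx> E N fzero c"
    using x mlrel_fin[OF x(1)] by (intro E_teq) (auto simp: teq_zero_iff)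
  then show ?thesis by (simp add: teq_zero_iff)
qed

lemma E_lin: "fin x \<Longrightarrow> sd N x \<Longrightarrow> linE scale (E N x)"
  unfolding linE_def
proof (intro conjI allI)
  assume x: "fin x" "sd N x"
  fix a b
  have "E N x (a + b) \<approx> fzip mult (fadd (D N a) (D N b)) x"
    unfolding E_def using D_lin x
    by (intro teq_fzip_left[where m=mult, OF mult_add_l mult_sc_l]) (auto simp: linE_def)
  also have "\<dots> = fadd (E N x a) (E N x b)" by (simp add: E_def fzip_fadd_left)
  finally show "E N x (a + b) \<approx> fadd (E N x a) (E N x b)" .
next
  assume x: "fin x" "sd N x"
  fix a b
  have "E N x (scale a b) \<approx> fzip mult (fsmult a (D N b)) x"
    unfolding E_def using D_lin x
    by (intro teq_fzip_left[where m=mult, OF mult_add_l mult_sc_l]) (auto simp: linE_def)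
  also have "\<dots> = fsmult a (E N x b)" by (simp add: E_def fzip_fsmult_left)
  finally show "E N x (scale a b) \<approx> fsmult a (E N x b)" .
next
  assume x: "fin x" "sd N x"
  fix a show "fin (E N x a)" using x by simp
qed

lemma map2_unit: "length ys = N \<Longrightarrow> map2 mult (replicate N u) ys = ys"
  by (induction ys arbitrary: N) (auto simp: Suc_length_conv)

lemma E_u: "fin x \<Longrightarrow> sd N x \<Longrightarrow> E N x u \<approx> x"
proof -
  assume x: "fin x" "sd N x"
  have "E N x u \<approx> fzip mult (basis (replicate N u)) x"
    unfolding E_def using x
    by (intro teq_fzip_left[where m=mult, OF mult_add_l mult_sc_l D_unit]) (auto intro: sd_basis)
  also have "\<dots> = flin x basis"
    unfolding fzip_basis_left using x by (intro flin_cong) (auto simp: sd_def map2_unit)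
  also have "\<dots> = x" using x by (simp add: flin_id)
  finally show ?thesis .
qed

lemma E_mu: "E 2 (basis [u, u]) c = Delta c"
proof -
  have "E 2 (basis [u, u]) c = flin (Delta c) (\<lambda>xs. basis (map2 mult xs [u, u]))"
    by (simp add: E_def D2 fzip_basis_right)
  also have "\<dots> = flin (Delta c) basis"
    by (rule flin_cong) (auto dest!: Delta_supp elim!: len2_cases)
  finally show ?thesis by (simp add: flin_id)
qed

lemma E_e: "E 0 (basis []) c = fsmult (eps c) (basis [])"
  by (simp add: E_def fzip_fsmult_left fzip_basis_left)


lemma ocomp_alt: "1 \<le> i \<Longrightarrow> ocomp mult Delta eps i x y =
   flin x (\<lambda>as. flin y (\<lambda>bs. Psi (i - 1) (\<lambda>a. fzip mult (D (length bs) a) (basis bs)) as))"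
  by (simp add: ocomp_def)

lemma cecomp_alt: "1 \<le> i \<Longrightarrow> cecomp i F G c = flin (F c) (Psi (i - 1) G)"
  by (simp add: cecomp_def)

lemma sd_Psi:
  assumes "length vs = m" "j < m" "\<And>z. fin (G z)" "\<And>z. sd n (G z)"
  shows "sd (j + n + (m - Suc j)) (Psi j G vs)"
  using assms by (intro sd_fmul sd_basis fin_fmul fin_basis) auto

lemma sd_Psi':
  assumes "length vs = m" "j < m" "\<And>z. fin (G z)" "\<And>z. sd n (G z)" "N = j + n + (m - Suc j)"
  shows "sd N (Psi j G vs)"
  using sd_Psi assms by blast

lemma fin_fzip_D[simp]: "fin (fzip mult (D n a) (basis bs))" by simp

lemma ocomp_hom:
  assumes "fin x" "sd m x" "fin y" "sd n y" "1 \<le> i" "i \<le> m"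
  shows "fin (ocomp mult Delta eps i x y) \<and> sd (m + n - 1) (ocomp mult Delta eps i x y)"
proof
  show "fin (ocomp mult Delta eps i x y)"
    using assms by (simp add: ocomp_alt fin_flin)
  show "sd (m + n - 1) (ocomp mult Delta eps i x y)"
    unfolding ocomp_alt[OF assms(5)]
  proof (intro sd_flin)
    fix as bs assume "x as \<noteq> 0" "y bs \<noteq> 0"
    then have l: "length as = m" "length bs = n" using assms by (auto simp: sd_def)
    show "sd (m + n - 1) (Psi (i - 1) (\<lambda>a. fzip mult (D (length bs) a) (basis bs)) as)"
      by (rule sd_Psi'[where n=n and m=m]) (use l assms in \<open>auto intro: sd_fzip sd_basis\<close>)
  qed
qed

lemma cecomp_hom:
  assumes "fin (F c)" "sd m (F c)" "\<And>z. fin (G z)" "\<And>z. sd n (G z)" "1 \<le> i" "i \<le> m"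
  shows "fin (cecomp i F G c) \<and> sd (m + n - 1) (cecomp i F G c)"
proof
  show "fin (cecomp i F G c)"
    using assms by (simp add: cecomp_alt fin_flin)
  show "sd (m + n - 1) (cecomp i F G c)"
    unfolding cecomp_alt[OF assms(5)]
  proof (intro sd_flin)
    fix as assume "F c as \<noteq> 0"
    then have l: "length as = m" using assms by (auto simp: sd_def)
    show "sd (m + n - 1) (Psi (i - 1) G as)"
      by (rule sd_Psi'[where n=n and m=m]) (use l assms in auto)
  qed
qed

lemma cecomp_teq_left:
  assumes "F c \<approx> F' c" "fin (F c)" "fin (F' c)" "sd m (F c)" "sd m (F' c)"
    "linE scale G" "1 \<le> i" "i \<le> m"
  shows "cecomp i F G c \<approx> cecomp i F' G c"
proof -
  have e: "i - 1 + 1 + (m - i) = m" using assms by simp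
  show ?thesis unfolding cecomp_alt[OF assms(7)]
    by (rule teq_flin_left[OF assms(1-5) MLn_Psi[OF assms(6), of "i - 1" "m - i", unfolded e]])
qed

lemma cecomp_teq_right:
  assumes "\<And>z. G z \<approx> G' z" "\<And>z. fin (G z)" "\<And>z. fin (G' z)" "1 \<le> i"
  shows "cecomp i F G c \<approx> cecomp i F G' c"
  unfolding cecomp_alt[OF assms(4)]
  by (intro teq_flin_right teq_fmul teq_refl assms) (auto simp: assms)

lemma map2_take: "take j (map2 f xs ys) = map2 f (take j xs) (take j ys)"
  by (simp add: take_map take_zip)
lemma map2_drop: "drop j (map2 f xs ys) = map2 f (drop j xs) (drop j ys)"
  by (simp add: drop_map drop_zip)
lemma map2_nth: "j < length xs \<Longrightarrow> j < length ys \<Longrightarrow> map2 f xs ys ! j = f (xs ! j) (ys ! j)"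
  by simp

lemma KP:
  assumes l: "length vs = m" "length as = m" "j < m" "length bs = n"
  shows "fzip mult (Psi j (D n) vs) (Psi j (\<lambda>a. fzip mult (D n a) (basis bs)) as) \<approx>
         Psi j (E n (basis bs)) (map2 mult vs as)"
proof -
  let ?v = "vs ! j" and ?a = "as ! j"
  have sdG: "sd n (fzip mult (D n a) (basis bs))" for a using l by (intro sd_fzip sd_basis) auto
  have "fzip mult (Psi j (D n) vs) (Psi j (\<lambda>a. fzip mult (D n a) (basis bs)) as) =
    fmul (fzip mult (fmul (basis (take j vs)) (D n ?v)) (fmul (basis (take j as)) (fzip mult (D n ?a) (basis bs))))
         (fzip mult (basis (drop (Suc j) vs)) (basis (drop (Suc j) as)))"
    by (rule fzip_fmul[where p="j + n"]) (use l sdG in \<open>auto intro!: sd_fmul sd_basis\<close>)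
  also have "\<dots> = fmul (fmul (basis (map2 mult (take j vs) (take j as))) (fzip mult (D n ?v) (fzip mult (D n ?a) (basis bs))))
         (basis (map2 mult (drop (Suc j) vs) (drop (Suc j) as)))"
    by (subst fzip_fmul[where p=j]) (use l sdG in \<open>auto simp: fzip_basis_left intro: sd_basis\<close>)
  also have "\<dots> = fmul (fmul (basis (map2 mult (take j vs) (take j as))) (fzip mult (fzip mult (D n ?v) (D n ?a)) (basis bs)))
         (basis (map2 mult (drop (Suc j) vs) (drop (Suc j) as)))"
    by (simp add: fzip_assoc mult_assoc)
  also have "\<dots> \<approx> fmul (fmul (basis (map2 mult (take j vs) (take j as))) (fzip mult (D n (mult ?v ?a)) (basis bs)))
         (basis (map2 mult (drop (Suc j) vs) (drop (Suc j) as)))"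
    apply (intro teq_fmul teq_refl)
    apply (rule teq_fzip_left[where m=mult, OF mult_add_l mult_sc_l teq_sym[OF D_mult]])
    using l by (auto intro: sd_basis)
  also have "\<dots> = Psi j (E n (basis bs)) (map2 mult vs as)"
    using l by (simp add: map2_take map2_drop E_def)
  finally show ?thesis .
qed


lemma KB:
  assumes l: "length as = j + 1 + k" "length bs = n"
  shows "E (j + n + k) (Psi j (\<lambda>a. fzip mult (D n a) (basis bs)) as) c \<approx>
         flin (E (j + 1 + k) (basis as) c) (Psi j (E n (basis bs)))"
proof -
  let ?G = "\<lambda>a. fzip mult (D n a) (basis bs)"
  let ?m = "j + 1 + k"
  have sdG: "sd n (?G a)" for a using l by (intro sd_fzip sd_basis) auto
  have sdPhi: "sd (j + n + k) (Psi j ?G as)"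
    by (rule sd_Psi'[where m="?m" and n=n]) (use l sdG in auto)
  have sdQ: "sd (j + n + k) (flin (D ?m c) (Psi j (D n)))"
  proof (rule sd_flin)
    fix vs assume "D ?m c vs \<noteq> 0"
    then have "length vs = ?m" using D_sd[of ?m c] by (simp add: sd_def)
    then show "sd (j + n + k) (Psi j (D n) vs)"
      by (intro sd_Psi'[where m="?m" and n=n]) auto
  qed
  have "E (j + n + k) (Psi j ?G as) c = fzip mult (D (j + n + k) c) (Psi j ?G as)" by (simp add: E_def)
  also have "\<dots> \<approx> fzip mult (flin (D ?m c) (Psi j (D n))) (Psi j ?G as)"
    by (rule teq_fzip_left[where m=mult, OF mult_add_l mult_sc_l D_coa]) (use sdPhi sdQ in \<open>auto intro!: fin_flin\<close>)
  also have "\<dots> = flin (D ?m c) (\<lambda>vs. fzip mult (Psi j (D n) vs) (Psi j ?G as))"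
    by (rule fzip_flin_left) auto
  also have "\<dots> \<approx> flin (D ?m c) (\<lambda>vs. Psi j (E n (basis bs)) (map2 mult vs as))"
  proof (rule teq_flin_right)
    fix vs assume "D ?m c vs \<noteq> 0"
    then have "length vs = ?m" using D_sd[of ?m c] by (simp add: sd_def)
    then show "fzip mult (Psi j (D n) vs) (Psi j ?G as) \<approx> Psi j (E n (basis bs)) (map2 mult vs as)"
      by (intro KP) (use l in auto)
  qed
  also have "\<dots> = flin (flin (D ?m c) (\<lambda>vs. basis (map2 mult vs as))) (Psi j (E n (basis bs)))"
    by (subst flin_assoc) auto
  also have "\<dots> = flin (E ?m (basis as) c) (Psi j (E n (basis bs)))"
    by (simp add: E_def fzip_basis_right)
  finally show ?thesis .
qed

lemma Psi_flin:
  fixes y :: "('c,'k) fm" and ws :: "'c list" and H :: "'c list \<Rightarrow> 'c \<Rightarrow> ('c,'k) fm"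
  assumes "fin y" "\<And>b z. fin (H b z)"
  shows "Psi j (\<lambda>z. flin y (\<lambda>b. H b z)) ws = flin y (\<lambda>b. Psi j (H b) ws)"
proof -
  have "fmul (basis (take j ws)) (flin y (\<lambda>b. H b (ws ! j))) = flin y (\<lambda>b. fmul (basis (take j ws)) (H b (ws ! j)))"
    by (rule fmul_flin_right) (use assms in auto)
  moreover have "fmul (flin y (\<lambda>b. fmul (basis (take j ws)) (H b (ws ! j)))) (basis (drop (Suc j) ws)) =
     flin y (\<lambda>b. fmul (fmul (basis (take j ws)) (H b (ws ! j))) (basis (drop (Suc j) ws)))"
    by (rule fmul_flin_left) (use assms in auto)
  ultimately show ?thesis by simp
qed

lemma K:
  assumes x: "fin x" "sd (j + 1 + k) x" and y: "fin y" "sd n y"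
  shows "E (j + n + k) (ocomp mult Delta eps (Suc j) x y) c \<approx>
         cecomp (Suc j) (E (j + 1 + k) x) (E n y) c"
proof -
  let ?m = "j + 1 + k" and ?N = "j + n + k"
  let ?G = "\<lambda>bs a. fzip mult (D n a) (basis bs)"
  have "ocomp mult Delta eps (Suc j) x y = flin x (\<lambda>as. flin y (\<lambda>bs. Psi j (?G bs) as))"
    unfolding ocomp_alt[of "Suc j", simplified]
    by (intro flin_cong) (use y in \<open>auto simp: sd_def\<close>)
  hence "E ?N (ocomp mult Delta eps (Suc j) x y) c = flin x (\<lambda>as. flin y (\<lambda>bs. E ?N (Psi j (?G bs) as) c))"
    using x y by (simp add: E_flin fin_flin)
  also have "\<dots> \<approx> flin x (\<lambda>as. flin y (\<lambda>bs. flin (E ?m (basis as) c) (Psi j (E n (basis bs)))))"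
  proof (intro teq_flin_right)
    fix as bs assume "x as \<noteq> 0" "y bs \<noteq> 0"
    then have "length as = ?m" "length bs = n" using x y by (auto simp: sd_def)
    then show "E ?N (Psi j (?G bs) as) c \<approx> flin (E ?m (basis as) c) (Psi j (E n (basis bs)))"
      by (rule KB)
  qed
  also have "\<dots> = flin x (\<lambda>as. flin (E ?m (basis as) c) (\<lambda>ws. flin y (\<lambda>bs. Psi j (E n (basis bs)) ws)))"
    by (intro flin_cong flin_swap)
  also have "\<dots> = flin x (\<lambda>as. flin (E ?m (basis as) c) (Psi j (E n y)))"
  proof -
    have Ey: "E n y z = flin y (\<lambda>b. E n (basis b) z)" for z
      using y by (subst (1) flin_id[OF y(1), symmetric]) (simp add: E_flin)
    have "Psi j (E n y) ws = flin y (\<lambda>b. Psi j (E n (basis b)) ws)" for ws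
    proof -
      have "Psi j (E n y) ws = Psi j (\<lambda>z. flin y (\<lambda>b. E n (basis b) z)) ws" by (simp only: Ey)
      also have "\<dots> = flin y (\<lambda>b. Psi j (E n (basis b)) ws)" by (rule Psi_flin) (use y in auto)
      finally show ?thesis .
    qed
    then show ?thesis by simp
  qed
  also have "\<dots> = flin (flin x (\<lambda>as. E ?m (basis as) c)) (Psi j (E n y))"
    by (subst flin_assoc) (use x in auto)
  also have "\<dots> = flin (E ?m x c) (Psi j (E n y))"
    using x by (subst (2) flin_id[OF x(1), symmetric]) (simp add: E_flin)
  also have "\<dots> = cecomp (Suc j) (E ?m x) (E n y) c"
    by (simp add: cecomp_alt)
  finally show ?thesis .
qed

end


lemma fadd_neg_fsub: "fadd f (fsmult (-1) g) = fsub f (g :: ('c,'k::comm_ring_1) fm)"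
  by (simp add: fadd_def fsmult_def fsub_def)

lemma mlrel_teq: "f \<in> mlrel scale \<Longrightarrow> g \<in> mlrel scale \<Longrightarrow> teq scale f g"
  by (simp add: teq_def mlrel_sub)

context BA
begin

abbreviation "OpC \<equiv> OC scale mult u Delta eps"
abbreviation "OpE \<equiv> CE scale Delta eps"

lemma OpC_simps[simp]:
  "om_mem OpC = hom_deg" "om_null OpC f = (f \<in> mlrel scale)" "om_add OpC = fadd"
  "om_smult OpC = fsmult" "om_zero OpC = fzero" "om_comp OpC = ocomp mult Delta eps"
  "om_mu OpC = basis [u, u]" "om_e OpC = basis []"
  by (auto simp: OC_def)

lemma OpE_simps[simp]:
  "om_mem OpE = ce_mem scale" "om_null OpE g = (\<forall>c. g c \<in> mlrel scale)"
  "om_add OpE = (\<lambda>f g c. fadd (f c) (g c))" "om_smult OpE = (\<lambda>a f c. fsmult a (f c))"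
  "om_zero OpE = (\<lambda>c. fzero)" "om_comp OpE = cecomp" "om_mu OpE = Delta"
  "om_e OpE = (\<lambda>c. fsmult (eps c) (basis []))"
  by (auto simp: CE_def)

lemma osum_OpC: "osum OpC xs = foldr fadd xs fzero"
  by (simp add: osum_def)

lemma osum_OpE: "osum OpE xs = (\<lambda>c. foldr fadd (map (\<lambda>f. f c) xs) fzero)"
  by (induction xs) (auto simp: osum_def)

definition R :: "nat \<Rightarrow> ('c,'k) fm \<Rightarrow> ('c \<Rightarrow> ('c,'k) fm) \<Rightarrow> bool" where
  "R N X Y \<longleftrightarrow> fin X \<and> sd N X \<and> (\<forall>c. fin (Y c) \<and> sd N (Y c)) \<and> (\<forall>c. E N X c \<approx> Y c)"

lemma R_linE: "R N X Y \<Longrightarrow> linE scale Y"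
  unfolding linE_def
proof (intro conjI allI)
  assume r: "R N X Y"
  then have l: "linE scale (E N X)" by (intro E_lin) (auto simp: R_def)
  have t: "E N X c \<approx> Y c" for c using r by (simp add: R_def)
  fix a b
  have "Y (a + b) \<approx> E N X (a + b)" by (rule teq_sym[OF t])
  also have "\<dots> \<approx> fadd (E N X a) (E N X b)" using l by (simp add: linE_def)
  also have "\<dots> \<approx> fadd (Y a) (Y b)" by (intro teq_fadd t)
  finally show "Y (a + b) \<approx> fadd (Y a) (Y b)" .
next
  assume r: "R N X Y"
  then have l: "linE scale (E N X)" by (intro E_lin) (auto simp: R_def)
  have t: "E N X c \<approx> Y c" for c using r by (simp add: R_def)
  fix a b
  have "Y (scale a b) \<approx> E N X (scale a b)" by (rule teq_sym[OF t])
  also have "\<dots> \<approx> fsmult a (E N X b)" using l by (simp add: linE_def)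
  also have "\<dots> \<approx> fsmult a (Y b)" by (intro teq_fsmult t)
  finally show "Y (scale a b) \<approx> fsmult a (Y b)" .
next
  assume r: "R N X Y"
  fix a show "fin (Y a)" using r by (simp add: R_def)
qed

lemma R_ext: "fin X \<Longrightarrow> sd N X \<Longrightarrow> R N X (E N X)"
  by (simp add: R_def E_sd)

lemma R_hom: "hom_deg N X \<Longrightarrow> R N X (E N X)"
  by (simp add: R_ext hom_deg_iff)

lemma R_add: "R N X Y \<Longrightarrow> R N X' Y' \<Longrightarrow> R N (fadd X X') (\<lambda>c. fadd (Y c) (Y' c))"
  by (auto simp: R_def E_fadd intro: teq_fadd)

lemma R_smult: "R N X Y \<Longrightarrow> R N (fsmult a X) (\<lambda>c. fsmult a (Y c))"
  by (auto simp: R_def E_fsmult intro: teq_fsmult)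

lemma R_zero: "R N fzero (\<lambda>c. fzero)"
  by (auto simp: R_def)

lemma R_foldr: "(\<And>i. i \<in> set L \<Longrightarrow> R N (F i) (G i)) \<Longrightarrow>
   R N (foldr fadd (map F L) fzero) (\<lambda>c. foldr fadd (map (\<lambda>i. G i c) L) fzero)"
proof (induction L)
  case Nil then show ?case by (simp add: R_zero)
next
  case (Cons a L)
  then show ?case using R_add[of N "F a" "G a"] by simp
qed

lemma R_mu: "R 2 (basis [u, u]) Delta"
  by (auto simp: R_def E_mu intro: sd_basis)

lemma R_e: "R 0 (basis []) (\<lambda>c. fsmult (eps c) (basis []))"
  by (auto simp: R_def E_e intro!: sd_basis sd_fsmult)

lemma R_comp:
  assumes r1: "R m X1 Y1" and r2: "R n X2 Y2" and i: "1 \<le> i" "i \<le> m" and N: "N = m + n - 1"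
  shows "R N (ocomp mult Delta eps i X1 X2) (cecomp i Y1 Y2)"
proof -
  have a1: "fin X1" "sd m X1" "\<And>c. fin (Y1 c)" "\<And>c. sd m (Y1 c)" "\<And>c. E m X1 c \<approx> Y1 c"
    using r1 by (auto simp: R_def)
  have a2: "fin X2" "sd n X2" "\<And>c. fin (Y2 c)" "\<And>c. sd n (Y2 c)" "\<And>c. E n X2 c \<approx> Y2 c"
    using r2 by (auto simp: R_def)
  define j where "j = i - 1"
  define k where "k = m - i"
  have m: "m = j + 1 + k" and N': "N = j + n + k" and ij: "i = Suc j"
    using i N by (auto simp: j_def k_def)
  have h: "fin (ocomp mult Delta eps i X1 X2) \<and> sd N (ocomp mult Delta eps i X1 X2)"
    using ocomp_hom[OF a1(1,2) a2(1,2) i] N by simp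
  have hc: "fin (cecomp i Y1 Y2 c) \<and> sd N (cecomp i Y1 Y2 c)" for c
    using cecomp_hom[OF a1(3,4) a2(3,4) i] N by simp
  have "E N (ocomp mult Delta eps i X1 X2) c \<approx> cecomp i Y1 Y2 c" for c
  proof -
    have "E N (ocomp mult Delta eps i X1 X2) c \<approx> cecomp i (E m X1) (E n X2) c"
      using K[of X1 j k X2 n c] a1 a2 unfolding m N' ij by simp
    also have "\<dots> \<approx> cecomp i Y1 (E n X2) c"
      by (rule cecomp_teq_left[OF a1(5) _ _ _ a1(4) E_lin[OF a2(1,2)] i])
         (use a1 in \<open>auto intro: E_sd\<close>)
    also have "\<dots> \<approx> cecomp i Y1 Y2 c"
      by (rule cecomp_teq_right[OF a2(5)]) (use a2 i in auto)
    finally show ?thesis .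
  qed
  then show ?thesis using h hc by (simp add: R_def)
qed

lemma R_osub: "R N X Y \<Longrightarrow> R N X' Y' \<Longrightarrow> R N (osub OpC X X') (osub OpE Y Y')"
  by (simp add: osub_def R_add R_smult)

lemma R_cdiff: "R n X Y \<Longrightarrow> R (n + 1) (cdiff OpC n X) (cdiff OpE n Y)"
  unfolding cdiff_def
  apply (simp only: OpC_simps OpE_simps osum_OpC osum_OpE map_map o_def)
  apply (intro R_add R_smult R_foldr)
    apply (rule R_comp[OF R_mu]; simp)
   apply (rule R_comp[OF _ R_mu]; auto)
  apply (rule R_comp[OF R_mu]; simp)
  done

lemma R_cup: "R m X Y \<Longrightarrow> R n X' Y' \<Longrightarrow> R (m + n) (cup OpC m X X') (cup OpE m Y Y')"
  unfolding cup_def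
  apply simp
  apply (rule R_comp[where m="m+1"])
  apply (rule R_comp[OF R_mu]; simp)
  by simp_all

lemma R_obar: "R m X Y \<Longrightarrow> R n X' Y' \<Longrightarrow> R (m + n - 1) (obar OpC m n X X') (obar OpE m n Y Y')"
  unfolding obar_def
  apply (simp only: OpC_simps OpE_simps osum_OpC osum_OpE map_map o_def)
  apply (intro R_smult R_foldr)
  apply (rule R_comp; auto)
  done

lemma R_gbracket: "R m X Y \<Longrightarrow> R n X' Y' \<Longrightarrow>
   R (m + n - 1) (gbracket OpC m n X X') (gbracket OpE m n Y Y')"
  unfolding gbracket_def
  apply (rule R_osub)
   apply (rule R_obar; simp)
  apply (simp only: OpC_simps OpE_simps)
  apply (rule R_smult)
  using R_obar[of n X' Y' m X Y] by (simp add: add.commute)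

lemma R_null: "R N X Y \<Longrightarrow> X \<in> mlrel scale \<Longrightarrow> Y c \<in> mlrel scale"
  unfolding R_def using E_mlrel teq_mlrel teq_sym by metis

lemma R_mem: "R N X Y \<Longrightarrow> ce_mem scale N Y"
  using R_linE[of N X Y] by (auto simp: R_def ce_mem_def hom_deg_iff linE_def)

lemma cohomE:
  assumes "\<And>c. fin (A c)" "\<And>c. sd N (A c)" "\<And>c. fin (B c)" "\<And>c. sd N (B c)" "\<And>c. A c \<approx> B c"
  shows "cohom OpE N A B"
proof -
  have eq: "osub OpE A B = (\<lambda>c. fsub (A c) (B c))" by (simp add: osub_def fadd_neg_fsub)
  have z: "fsub (A c) (B c) \<in> mlrel scale" for c using assms(5) by (simp add: teq_def)
  have "ce_mem scale N (\<lambda>c. fsub (A c) (B c))"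
    unfolding ce_mem_def hom_deg_iff using assms z
    by (auto intro!: mlrel_teq mlrel.rel_plus mlrel.rel_scale)
  then show ?thesis unfolding cohom_def coboundary_def eq using z by simp
qed

lemma R_cohom: "R N X Y \<Longrightarrow> cohom OpE N (E N X) Y"
  by (rule cohomE) (auto simp: R_def E_sd)


lemma foldr_teq: "(\<And>i. i \<in> set L \<Longrightarrow> A i \<approx> B i) \<Longrightarrow>
   foldr fadd (map A L) fzero \<approx> foldr fadd (map B L) fzero"
  by (induction L) (auto intro: teq_fadd)

lemma flin_sandwich:
  fixes g :: "('c,'k) fm"
  assumes "fin g"
  shows "flin g (\<lambda>bs. fmul (fmul (basis T) (basis bs)) (basis Dr)) = fmul (fmul (basis T) g) (basis Dr)"
proof -
  have "fmul (fmul (basis T) g) (basis Dr) = fmul (fmul (basis T) (flin g basis)) (basis Dr)"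
    using assms by (simp add: flin_id)
  also have "\<dots> = fmul (flin g (\<lambda>bs. fmul (basis T) (basis bs))) (basis Dr)"
    by (subst fmul_flin_right) (use assms in auto)
  also have "\<dots> = flin g (\<lambda>bs. fmul (fmul (basis T) (basis bs)) (basis Dr))"
    by (subst fmul_flin_left) (use assms in auto)
  finally show ?thesis by simp
qed

lemma Ev_mu_left:
  assumes G: "ce_mem scale N G" and j: "j \<le> 1"
  shows "cecomp (Suc j) Delta G u \<approx> ocomp mult Delta eps (Suc j) (basis [u, u]) (G u)"
proof -
  have lin: "linE scale G" using G by (simp add: ce_mem_def linE_def hom_deg_iff)
  have gh: "fin (G z)" "sd N (G z)" for z using G by (auto simp: ce_mem_def hom_deg_iff)
  have e: "j + 1 + (1 - j) = 2" using j by simp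
  have "cecomp (Suc j) Delta G u = flin (Delta u) (Psi j G)" by (simp add: cecomp_alt)
  also have "\<dots> \<approx> flin (basis [u, u]) (Psi j G)"
    by (rule teq_flin_left[OF Delta_u _ _ _ _ MLn_Psi[OF lin, of j "1 - j", unfolded e]])
       (auto intro: sd_basis)
  also have "\<dots> = fmul (fmul (basis (take j [u, u])) (G u)) (basis (drop (Suc j) [u, u]))"
    using j by (auto simp: le_Suc_eq)
  also have "\<dots> = flin (G u) (\<lambda>bs. fmul (fmul (basis (take j [u, u])) (basis bs)) (basis (drop (Suc j) [u, u])))"
    by (rule flin_sandwich[symmetric]) (simp add: gh)
  also have "\<dots> \<approx> flin (G u) (\<lambda>bs. Psi j (\<lambda>a. fzip mult (D (length bs) a) (basis bs)) [u, u])"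
  proof (rule teq_flin_right)
    fix bs assume "G u bs \<noteq> 0"
    then have l: "length bs = N" using gh by (auto simp: sd_def)
    have uj: "[u, u] ! j = u" using j by (auto simp: le_Suc_eq)
    have b: "basis bs \<approx> E N (basis bs) u" by (rule teq_sym[OF E_u]) (auto intro: sd_basis l)
    have eq: "Psi j (\<lambda>a. fzip mult (D (length bs) a) (basis bs)) [u, u] =
       fmul (fmul (basis (take j [u, u])) (E N (basis bs) u)) (basis (drop (Suc j) [u, u]))"
      by (simp only: uj l E_def)
    show "fmul (fmul (basis (take j [u, u])) (basis bs)) (basis (drop (Suc j) [u, u])) \<approx>
        Psi j (\<lambda>a. fzip mult (D (length bs) a) (basis bs)) [u, u]"
      unfolding eq by (intro teq_fmul teq_refl b) auto
  qed
  also have "\<dots> = ocomp mult Delta eps (Suc j) (basis [u, u]) (G u)"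
    by (simp add: ocomp_alt)
  finally show ?thesis .
qed

lemma Ev_mu_right:
  assumes "1 \<le> i"
  shows "cecomp i G Delta u = ocomp mult Delta eps i (G u) (basis [u, u])"
proof -
  have "fzip mult (D 2 a) (basis [u, u]) = Delta a" for a using E_mu[of a] by (simp add: E_def)
  then show ?thesis using assms by (simp add: ocomp_alt cecomp_alt numeral_2_eq_2)
qed

lemma Ev_mu2: "ce_mem scale N G \<Longrightarrow> cecomp 2 Delta G u \<approx> ocomp mult Delta eps 2 (basis [u, u]) (G u)"
  using Ev_mu_left[of N G 1] by (simp add: numeral_2_eq_2)

lemma Ev_mu1: "ce_mem scale N G \<Longrightarrow> cecomp 1 Delta G u \<approx> ocomp mult Delta eps 1 (basis [u, u]) (G u)"
  using Ev_mu_left[of N G 0] by simp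

lemma Ev: "ce_mem scale N G \<Longrightarrow> cdiff OpE N G u \<approx> cdiff OpC N (G u)"
  unfolding cdiff_def
  apply (simp only: OpC_simps OpE_simps osum_OpC osum_OpE map_map o_def)
  apply (intro teq_fadd teq_fsmult foldr_teq)
    apply (erule Ev_mu2)
   apply (subst Ev_mu_right; auto)
  apply (erule Ev_mu1)
  done


lemma conj1: "cocycle OpC n x \<Longrightarrow> cocycle OpE n (E n x)"
proof -
  assume c: "cocycle OpC n x"
  then have h: "hom_deg n x" and z: "cdiff OpC n x \<in> mlrel scale" by (auto simp: cocycle_def)
  have r: "R n x (E n x)" using R_hom[OF h] .
  have "R (n + 1) (cdiff OpC n x) (cdiff OpE n (E n x))" by (rule R_cdiff[OF r])
  then have "\<forall>c. cdiff OpE n (E n x) c \<in> mlrel scale" using z R_null by blast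
  then show ?thesis using R_mem[OF r] by (simp add: cocycle_def)
qed

lemma osub_OpE_apply: "osub OpE A B c = fadd (A c) (fsmult (-1) (B c))"
  by (simp add: osub_def)

lemma conj2:
  assumes cx: "cocycle OpC n x" and cy: "cocycle OpC n y"
  shows "cohom OpC n x y \<longleftrightarrow> cohom OpE n (E n x) (E n y)"
proof -
  have hx: "hom_deg n x" and hy: "hom_deg n y" using cx cy by (auto simp: cocycle_def)
  have rxy: "R n (osub OpC x y) (osub OpE (E n x) (E n y))" by (intro R_osub R_hom hx hy)
  have hxy: "hom_deg n (osub OpC x y)" using rxy by (simp add: R_def hom_deg_iff)
  have rxyu: "osub OpE (E n x) (E n y) u \<approx> osub OpC x y"
  proof -
    have "osub OpE (E n x) (E n y) u \<approx> E n (osub OpC x y) u" using rxy by (simp add: R_def teq_sym)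
    also have "\<dots> \<approx> osub OpC x y" by (rule E_u) (use hxy in \<open>auto simp: hom_deg_iff\<close>)
    finally show ?thesis .
  qed
  show ?thesis
  proof
    assume "cohom OpC n x y"
    then have cb: "osub OpC x y \<in> mlrel scale \<or> (1 \<le> n \<and> (\<exists>g. hom_deg (n - 1) g \<and>
        osub OpC (osub OpC x y) (cdiff OpC (n - 1) g) \<in> mlrel scale))"
      by (simp add: cohom_def coboundary_def)
    have mem: "ce_mem scale n (osub OpE (E n x) (E n y))" by (rule R_mem[OF rxy])
    from cb show "cohom OpE n (E n x) (E n y)"
    proof
      assume "osub OpC x y \<in> mlrel scale"
      then show ?thesis using mem R_null[OF rxy] by (simp add: cohom_def coboundary_def)
    next
      assume "1 \<le> n \<and> (\<exists>g. hom_deg (n - 1) g \<and> osub OpC (osub OpC x y) (cdiff OpC (n - 1) g) \<in> mlrel scale)"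
      then obtain g where n: "1 \<le> n" and g: "hom_deg (n - 1) g"
        and z: "osub OpC (osub OpC x y) (cdiff OpC (n - 1) g) \<in> mlrel scale" by blast
      have rg: "R (n - 1) g (E (n - 1) g)" by (rule R_hom[OF g])
      have "R (n - 1 + 1) (cdiff OpC (n - 1) g) (cdiff OpE (n - 1) (E (n - 1) g))" by (rule R_cdiff[OF rg])
      then have rd: "R n (cdiff OpC (n - 1) g) (cdiff OpE (n - 1) (E (n - 1) g))" using n by simp
      have "R n (osub OpC (osub OpC x y) (cdiff OpC (n - 1) g))
                (osub OpE (osub OpE (E n x) (E n y)) (cdiff OpE (n - 1) (E (n - 1) g)))"
        by (rule R_osub[OF rxy rd])
      then have "\<forall>c. osub OpE (osub OpE (E n x) (E n y)) (cdiff OpE (n - 1) (E (n - 1) g)) c \<in> mlrel scale"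
        using z R_null by blast
      moreover have "ce_mem scale (n - 1) (E (n - 1) g)" by (rule R_mem[OF rg])
      ultimately show ?thesis using mem n by (auto simp: cohom_def coboundary_def)
    qed
  next
    assume "cohom OpE n (E n x) (E n y)"
    then have mem: "ce_mem scale n (osub OpE (E n x) (E n y))"
      and cb: "(\<forall>c. osub OpE (E n x) (E n y) c \<in> mlrel scale) \<or> (1 \<le> n \<and> (\<exists>G. ce_mem scale (n - 1) G \<and>
        (\<forall>c. osub OpE (osub OpE (E n x) (E n y)) (cdiff OpE (n - 1) G) c \<in> mlrel scale)))"
      by (auto simp: cohom_def coboundary_def)
    from cb show "cohom OpC n x y"
    proof
      assume "\<forall>c. osub OpE (E n x) (E n y) c \<in> mlrel scale"
      then have "osub OpC x y \<in> mlrel scale" using rxyu teq_mlrel teq_sym by metis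
      then show ?thesis using hxy by (simp add: cohom_def coboundary_def)
    next
      assume "1 \<le> n \<and> (\<exists>G. ce_mem scale (n - 1) G \<and>
        (\<forall>c. osub OpE (osub OpE (E n x) (E n y)) (cdiff OpE (n - 1) G) c \<in> mlrel scale))"
      then obtain G where n: "1 \<le> n" and G: "ce_mem scale (n - 1) G"
        and z: "\<forall>c. osub OpE (osub OpE (E n x) (E n y)) (cdiff OpE (n - 1) G) c \<in> mlrel scale" by blast
      have gh: "hom_deg (n - 1) (G u)" using G by (simp add: ce_mem_def)
      have "osub OpE (osub OpE (E n x) (E n y)) (cdiff OpE (n - 1) G) u =
            fadd (osub OpE (E n x) (E n y) u) (fsmult (-1) (cdiff OpE (n - 1) G u))"
        by (rule osub_OpE_apply)
      also have "\<dots> \<approx> fadd (osub OpC x y) (fsmult (-1) (cdiff OpC (n - 1) (G u)))"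
        by (intro teq_fadd teq_fsmult rxyu Ev[OF G])
      also have "\<dots> = osub OpC (osub OpC x y) (cdiff OpC (n - 1) (G u))"
        by (simp only: osub_def OpC_simps)
      finally have "osub OpE (osub OpE (E n x) (E n y)) (cdiff OpE (n - 1) G) u \<approx>
            osub OpC (osub OpC x y) (cdiff OpC (n - 1) (G u))" .
      then have "osub OpC (osub OpC x y) (cdiff OpC (n - 1) (G u)) \<in> mlrel scale"
        using z teq_mlrel teq_sym by metis
      then show ?thesis using hxy n gh by (auto simp: cohom_def coboundary_def)
    qed
  qed
qed

lemma main:
  "(\<forall>n x. cocycle OpC n x \<longrightarrow> cocycle OpE n (E n x))
   \<and> (\<forall>n x y. cocycle OpC n x \<longrightarrow> cocycle OpC n y \<longrightarrow>
        (cohom OpC n x y \<longleftrightarrow> cohom OpE n (E n x) (E n y)))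
   \<and> (\<forall>n x y. cocycle OpC n x \<longrightarrow> cocycle OpC n y \<longrightarrow>
        cohom OpE n (E n (om_add OpC x y)) (om_add OpE (E n x) (E n y)))
   \<and> (\<forall>n a x. cocycle OpC n x \<longrightarrow>
        cohom OpE n (E n (om_smult OpC a x)) (om_smult OpE a (E n x)))
   \<and> cohom OpE 0 (E 0 (om_e OpC)) (om_e OpE)
   \<and> (\<forall>m n x y. cocycle OpC m x \<longrightarrow> cocycle OpC n y \<longrightarrow>
        cohom OpE (m + n) (E (m + n) (cup OpC m x y)) (cup OpE m (E m x) (E n y)))
   \<and> (\<forall>m n x y. cocycle OpC m x \<longrightarrow> cocycle OpC n y \<longrightarrow>
        cohom OpE (m + n - 1) (E (m + n - 1) (gbracket OpC m n x y))
                            (gbracket OpE m n (E m x) (E n y)))"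
proof (intro conjI allI impI)
  fix n x assume "cocycle OpC n x" then show "cocycle OpE n (E n x)" by (rule conj1)
next
  fix n x y assume "cocycle OpC n x" "cocycle OpC n y"
  then show "cohom OpC n x y \<longleftrightarrow> cohom OpE n (E n x) (E n y)" by (rule conj2)
next
  fix n x y assume "cocycle OpC n x" "cocycle OpC n y"
  then have "R n (fadd x y) (\<lambda>c. fadd (E n x c) (E n y c))"
    by (intro R_add R_hom) (auto simp: cocycle_def)
  then show "cohom OpE n (E n (om_add OpC x y)) (om_add OpE (E n x) (E n y))"
    by (simp add: R_cohom)
next
  fix n a x assume "cocycle OpC n x"
  then have "R n (fsmult a x) (\<lambda>c. fsmult a (E n x c))"
    by (intro R_smult R_hom) (auto simp: cocycle_def)
  then show "cohom OpE n (E n (om_smult OpC a x)) (om_smult OpE a (E n x))"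
    by (simp add: R_cohom)
next
  show "cohom OpE 0 (E 0 (om_e OpC)) (om_e OpE)" using R_cohom[OF R_e] by simp
next
  fix m n x y assume "cocycle OpC m x" "cocycle OpC n y"
  then have "R (m + n) (cup OpC m x y) (cup OpE m (E m x) (E n y))"
    by (intro R_cup R_hom) (auto simp: cocycle_def)
  then show "cohom OpE (m + n) (E (m + n) (cup OpC m x y)) (cup OpE m (E m x) (E n y))"
    by (rule R_cohom)
next
  fix m n x y assume "cocycle OpC m x" "cocycle OpC n y"
  then have "R (m + n - 1) (gbracket OpC m n x y) (gbracket OpE m n (E m x) (E n y))"
    by (intro R_gbracket R_hom) (auto simp: cocycle_def)
  then show "cohom OpE (m + n - 1) (E (m + n - 1) (gbracket OpC m n x y)) (gbracket OpE m n (E m x) (E n y))"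
    by (rule R_cohom)
qed

end

theorem theorem4p1:
  fixes scale :: "'k::comm_ring_1 \<Rightarrow> 'c::ab_group_add \<Rightarrow> 'c"
    and mult :: "'c \<Rightarrow> 'c \<Rightarrow> 'c" and u :: 'c
    and Delta :: "'c \<Rightarrow> ('c, 'k) fm" and eps :: "'c \<Rightarrow> 'k"
  assumes bialg: "bialgebra scale mult u Delta eps"
  defines "OpC \<equiv> OC scale mult u Delta eps"
    and "OpE \<equiv> CE scale Delta eps"
    and "ext \<equiv> extmap mult Delta eps"
  shows
    "(\<forall>n x. cocycle OpC n x \<longrightarrow> cocycle OpE n (ext n x))
   \<and> (\<forall>n x y. cocycle OpC n x \<longrightarrow> cocycle OpC n y \<longrightarrow>
        (cohom OpC n x y \<longleftrightarrow> cohom OpE n (ext n x) (ext n y)))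
   \<and> (\<forall>n x y. cocycle OpC n x \<longrightarrow> cocycle OpC n y \<longrightarrow>
        cohom OpE n (ext n (om_add OpC x y)) (om_add OpE (ext n x) (ext n y)))
   \<and> (\<forall>n a x. cocycle OpC n x \<longrightarrow>
        cohom OpE n (ext n (om_smult OpC a x)) (om_smult OpE a (ext n x)))
   \<and> cohom OpE 0 (ext 0 (om_e OpC)) (om_e OpE)
   \<and> (\<forall>m n x y. cocycle OpC m x \<longrightarrow> cocycle OpC n y \<longrightarrow>
        cohom OpE (m + n) (ext (m + n) (cup OpC m x y)) (cup OpE m (ext m x) (ext n y)))
   \<and> (\<forall>m n x y. cocycle OpC m x \<longrightarrow> cocycle OpC n y \<longrightarrow>
        cohom OpE (m + n - 1) (ext (m + n - 1) (gbracket OpC m n x y))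
                            (gbracket OpE m n (ext m x) (ext n y)))"
  unfolding OpC_def OpE_def ext_def
  by (rule BA.main[OF BA.intro[OF bialg]])


end
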